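(* Let $\{X_n,n\geq1\}$ be a $\varphi$-mixing sequence of random variables with common marginal distribution function $F$, whose mixing coefficients satisfy $\sum_{n=1}^\infty\varphi^{1/2}(n)<\infty$. Fix $p\in(0,1)$ and let $\xi_p=\inf\{x:F(x)\geq p\}$. Assume that $F$ possesses a positive continuous density $f$ in a neighborhood $\mathscr{N}_p$ of $\xi_p$ such that $0<d=\sup\{f(x):x\in\mathscr{N}_p\}<\infty$. Let $C_3=4\big[1+4\sum_{n=1}^\infty\varphi^{1/2}(n)\big]$. For any $\theta>0$ put $$\tau_n=\frac{\sqrt{16C_3+\theta}\,(\log n)^{3/2}}{n^{1/2}(\log\log n)^{1/2}},\qquad \mathscr{E}_n=[\xi_p-\tau_n,\xi_p+\tau_n].$$ Then with probability 1, $$\sup_{x\in\mathscr{E}_n}\big|(F_n(x)-F(x))-(F_n(\xi_p)-p)\big|\leq(1+d)\left(\frac{(16C_3+\theta)\log n}{n}\right)^{1/2}$$ for all $n$ sufficiently large.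
   Context: All random variables are defined on a probability space $(\Omega,\mathcal{F},P)$. $F_n(x)=\frac1n\sum_{i=1}^n I(X_i\leq x)$ is the empirical distribution function of $X_1,\dots,X_n$. For $n\leq m$ let $\mathcal{F}_n^m=\sigma(X_i,n\leq i\leq m)$. For sub-$\sigma$-algebras $\mathcal{B},\mathcal{R}$ let $\varphi(\mathcal{B},\mathcal{R})=\sup_{A\in\mathcal{B},B\in\mathcal{R},P(A)>0}|P(B\mid A)-P(B)|$, and the mixing coefficients are $\varphi(n)=\sup_{k\geq1}\varphi(\mathcal{F}_1^k,\mathcal{F}_{k+n}^\infty)$. The sequence is called $\varphi$-mixing if $\varphi(n)\downarrow0$ as $n\to\infty$. *)

theory Defs
  imports "HOL-Probability.Probability"
begin

definition gen_sigma :: "'a measure \<Rightarrow> (nat \<Rightarrow> 'a \<Rightarrow> real) \<Rightarrow> nat set \<Rightarrow> 'a set set" where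
  "gen_sigma M X I = sigma_sets (space M)
     (\<Union>i\<in>I. {X i -` B \<inter> space M | B. B \<in> sets borel})"

definition phi_coef :: "'a measure \<Rightarrow> 'a set set \<Rightarrow> 'a set set \<Rightarrow> real" where
  "phi_coef M \<B> \<R> = Sup {\<bar>measure M (A \<inter> C) / measure M A - measure M C\<bar> | A C.
       A \<in> \<B> \<and> C \<in> \<R> \<and> measure M A > 0}"

definition phi_mix :: "'a measure \<Rightarrow> (nat \<Rightarrow> 'a \<Rightarrow> real) \<Rightarrow> nat \<Rightarrow> real" where
  "phi_mix M X n = (SUP k\<in>{1..}. phi_coef M (gen_sigma M X {1..k}) (gen_sigma M X {k+n..}))"

definition emp_df :: "(nat \<Rightarrow> 'a \<Rightarrow> real) \<Rightarrow> nat \<Rightarrow> 'a \<Rightarrow> real \<Rightarrow> real" where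
  "emp_df X n \<omega> x = (1 / real n) * (\<Sum>i=1..n. if X i \<omega> \<le> x then 1 else 0)"

end

theory Submission
  imports Defs "HOL-Real_Asymp.Real_Asymp"
begin

lemma ev_nat: "eventually P at_top \<Longrightarrow> eventually (\<lambda>n::nat. P (real n)) sequentially"
  using filterlim_real_sequentially unfolding filterlim_iff by blast

lemma asy1: "((\<lambda>n::real. ln n powr (3/2) / (sqrt n * sqrt (ln (ln n)))) \<longlongrightarrow> 0) at_top"
  by real_asymp

lemma asy2: "((\<lambda>n::real. sqrt (ln n / n)) \<longlongrightarrow> 0) at_top"
  by real_asymp

lemma asy3: "eventually (\<lambda>n::real. 2 * (ln n powr (3/2) / (sqrt n * sqrt (ln (ln n)))) / sqrt (ln n / n) + 4 \<le> n powr (1/12)) at_top"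
  by real_asymp

lemma asy5: "eventually (\<lambda>n::real. 0 \<le> ln (ln n)) at_top"
  by real_asymp

lemma asy4: "((\<lambda>n::real. sqrt (ln n / n) * (n powr (1/3) + 1)) \<longlongrightarrow> 0) at_top"
  by real_asymp

locale mx = prob_space M for M :: "'a measure" +
  fixes X :: "nat \<Rightarrow> 'a \<Rightarrow> real" and F :: "real \<Rightarrow> real"
  assumes rv: "\<And>i. X i \<in> borel_measurable M"
  and marg: "\<And>i x. i \<ge> 1 \<Longrightarrow> measure M {\<omega> \<in> space M. X i \<omega> \<le> x} = F x"
  and summ: "summable (\<lambda>n. sqrt (phi_mix M X (Suc n)))"
  and dec: "decseq (phi_mix M X)"
begin

definition gens :: "nat set \<Rightarrow> 'a set set" where
 "gens I = (\<Union>i\<in>I. {X i -` B \<inter> space M | B. B \<in> sets borel})"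

definition SM :: "nat set \<Rightarrow> 'a measure" where
 "SM I = sigma (space M) (gens I)"

lemma gens_sub: "gens I \<subseteq> Pow (space M)" unfolding gens_def by auto

lemma gens_sets: "gens I \<subseteq> sets M"
  unfolding gens_def using rv by (auto intro: measurable_sets)

lemma sets_SM: "sets (SM I) = gen_sigma M X I"
  unfolding SM_def gen_sigma_def gens_def[symmetric] using sets_measure_of[OF gens_sub] by simp

lemma space_SM: "space (SM I) = space M"
  unfolding SM_def using space_measure_of[OF gens_sub] by simp

lemma X_SM: "i \<in> I \<Longrightarrow> X i \<in> borel_measurable (SM I)"
proof (rule measurableI)
  fix A :: "real set" assume "A \<in> sets borel" "i \<in> I"
  then have "X i -` A \<inter> space M \<in> gens I" unfolding gens_def by blast
  then show "X i -` A \<inter> space (SM I) \<in> sets (SM I)"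
    unfolding sets_SM space_SM gen_sigma_def gens_def[symmetric] by (rule sigma_sets.Basic)
qed auto

lemma gen_sub: "gen_sigma M X I \<subseteq> sets M"
  unfolding gen_sigma_def gens_def[symmetric] by (rule sets.sigma_sets_subset[OF gens_sets])

lemma space_gen: "space M \<in> gen_sigma M X I"
  unfolding gen_sigma_def by (rule sigma_sets_top)

lemma elem_le1:
  assumes "A \<in> sets M" "C \<in> sets M" "measure M A > 0"
  shows "\<bar>measure M (A \<inter> C) / measure M A - measure M C\<bar> \<le> 1"
proof -
  have "measure M (A \<inter> C) \<le> measure M A" using assms by (intro finite_measure_mono) auto
  then have r: "measure M (A \<inter> C) / measure M A \<le> 1" "0 \<le> measure M (A \<inter> C) / measure M A"
    using assms(3) by auto
  have "measure M C \<le> 1" "0 \<le> measure M C" by auto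
  with r show ?thesis by linarith
qed

lemma phi_set_bdd:
  assumes "B \<subseteq> sets M" "R \<subseteq> sets M"
  shows "\<forall>z \<in> {\<bar>measure M (A \<inter> C) / measure M A - measure M C\<bar> | A C.
       A \<in> B \<and> C \<in> R \<and> measure M A > 0}. z \<le> 1"
  using assms by (force intro: elem_le1)

lemma phi_coef_upper:
  assumes "B \<subseteq> sets M" "R \<subseteq> sets M" "A \<in> B" "C \<in> R" "measure M A > 0"
  shows "\<bar>measure M (A \<inter> C) / measure M A - measure M C\<bar> \<le> phi_coef M B R"
  unfolding phi_coef_def
proof (rule cSup_upper)
  show "bdd_above {\<bar>measure M (A \<inter> C) / measure M A - measure M C\<bar> | A C.
       A \<in> B \<and> C \<in> R \<and> measure M A > 0}"
    using phi_set_bdd[OF assms(1,2)] by (intro bdd_aboveI[where M=1]) blast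
qed (use assms in blast)

lemma phi_coef_le1:
  assumes "B \<subseteq> sets M" "R \<subseteq> sets M" "space M \<in> B" "space M \<in> R"
  shows "phi_coef M B R \<le> 1"
  unfolding phi_coef_def
proof (rule cSup_least)
  show "{\<bar>measure M (A \<inter> C) / measure M A - measure M C\<bar> | A C.
       A \<in> B \<and> C \<in> R \<and> measure M A > 0} \<noteq> {}"
    using assms by (auto intro!: exI[of _ "space M"] simp: prob_space)
qed (use phi_set_bdd[OF assms(1,2)] in auto)

lemma phi_coef_nonneg:
  assumes "B \<subseteq> sets M" "R \<subseteq> sets M" "space M \<in> B" "space M \<in> R"
  shows "0 \<le> phi_coef M B R"
proof -
  have "\<bar>measure M (space M \<inter> space M) / measure M (space M) - measure M (space M)\<bar> \<le> phi_coef M B R"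
    using assms by (intro phi_coef_upper) (auto simp: prob_space)
  then show ?thesis by (simp add: prob_space)
qed

lemma phi_coef_gen_le1: "phi_coef M (gen_sigma M X I) (gen_sigma M X J) \<le> 1"
  by (rule phi_coef_le1[OF gen_sub gen_sub space_gen space_gen])

lemma phi_mix_ge:
  assumes "k \<ge> 1"
  shows "phi_coef M (gen_sigma M X {1..k}) (gen_sigma M X {k+g..}) \<le> phi_mix M X g"
  unfolding phi_mix_def
  by (rule cSUP_upper) (use assms phi_coef_gen_le1 in \<open>auto intro!: bdd_aboveI[where M=1]\<close>)

lemma phi_mix_le1: "phi_mix M X g \<le> 1"
  unfolding phi_mix_def by (rule cSUP_least) (use phi_coef_gen_le1 in auto)

lemma phi_mix_nonneg: "0 \<le> phi_mix M X g"
  using phi_mix_ge[of 1 g] phi_coef_nonneg[OF gen_sub gen_sub space_gen space_gen, of "{1..1}" "{1+g..}"] by linarith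

lemma event_mix:
  assumes "k \<ge> 1" "A \<in> gen_sigma M X {1..k}" "B \<in> gen_sigma M X {k+g..}"
  shows "\<bar>measure M (A \<inter> B) - measure M A * measure M B\<bar> \<le> measure M A * phi_mix M X g"
proof (cases "measure M A > 0")
  case True
  have "\<bar>measure M (A \<inter> B) / measure M A - measure M B\<bar> \<le> phi_mix M X g"
    using phi_coef_upper[OF gen_sub gen_sub assms(2,3) True] phi_mix_ge[OF assms(1), of g] by linarith
  then have "measure M A * \<bar>measure M (A \<inter> B) / measure M A - measure M B\<bar> \<le> measure M A * phi_mix M X g"
    using True by (intro mult_left_mono) auto
  also have "measure M A * \<bar>measure M (A \<inter> B) / measure M A - measure M B\<bar>
     = \<bar>measure M (A \<inter> B) - measure M A * measure M B\<bar>"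
  proof -
    have "measure M A * (measure M (A \<inter> B) / measure M A - measure M B) = measure M (A \<inter> B) - measure M A * measure M B"
      using True by (simp add: field_simps)
    then show ?thesis using True by (metis abs_mult abs_of_pos)
  qed
  finally show ?thesis .
next
  case False
  then have "measure M A = 0" using measure_nonneg[of M A] by linarith
  moreover have "measure M (A \<inter> B) \<le> measure M A"
    using assms gen_sub by (intro finite_measure_mono) auto
  ultimately show ?thesis using measure_nonneg[of M "A \<inter> B"] by simp
qed


lemma SM_to_M: "Y \<in> borel_measurable (SM I) \<Longrightarrow> Y \<in> borel_measurable M"
  by (rule measurableI) (use gen_sub measurable_sets[of Y "SM I" borel] in \<open>auto simp: sets_SM space_SM\<close>)

lemma SM_level: "(Y :: 'a \<Rightarrow> real) \<in> borel_measurable (SM I) \<Longrightarrow> finite T \<Longrightarrow> Y -` T \<inter> space M \<in> gen_sigma M X I"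
proof -
  assume a: "Y \<in> borel_measurable (SM I)" "finite T"
  have "T \<in> sets borel" by (rule borel_closed[OF finite_imp_closed[OF a(2)]])
  then have "Y -` T \<inter> space (SM I) \<in> sets (SM I)" by (rule measurable_sets[OF a(1)])
  then show ?thesis unfolding sets_SM space_SM .
qed

lemma fin_rep:
  fixes Y :: "'a \<Rightarrow> real"
  assumes "finite (Y ` space M)" "\<omega> \<in> space M"
  shows "Y \<omega> = (\<Sum>y\<in>Y ` space M. y * indicator (Y -` {y} \<inter> space M) \<omega>)"
proof -
  have "(\<Sum>y\<in>Y ` space M. y * indicator (Y -` {y} \<inter> space M) \<omega>)
      = (\<Sum>y\<in>Y ` space M. if y = Y \<omega> then y else 0)"
  proof (rule sum.cong[OF refl])
    fix y assume "y \<in> Y ` space M"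
    show "y * indicator (Y -` {y} \<inter> space M) \<omega> = (if y = Y \<omega> then y else 0)"
      using assms(2) by (cases "y = Y \<omega>") (auto simp: indicator_def)
  qed
  also have "\<dots> = Y \<omega>" using assms by (simp add: sum.delta')
  finally show ?thesis by simp
qed

lemma integral_fin:
  fixes Y :: "'a \<Rightarrow> real"
  assumes "Y \<in> borel_measurable M" "finite (Y ` space M)"
  shows "integral\<^sup>L M Y = (\<Sum>y\<in>Y ` space M. y * prob (Y -` {y} \<inter> space M))"
proof -
  have "integral\<^sup>L M Y = (\<integral>\<omega>. (\<Sum>y\<in>Y ` space M. y * indicator (Y -` {y} \<inter> space M) \<omega>) \<partial>M)"
    by (rule Bochner_Integration.integral_cong[OF refl fin_rep[OF assms(2)]])
  also have "\<dots> = (\<Sum>y\<in>Y ` space M. y * prob (Y -` {y} \<inter> space M))"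
  proof -
    have ev: "Y -` {y} \<inter> space M \<in> sets M" for y using measurable_sets[OF assms(1)] by simp
    show ?thesis
      by (subst Bochner_Integration.integral_sum) (auto intro!: integrable_mult_right integrable_real_indicator ev simp: Int_absorb2 emeasure_finite less_top[symmetric])
  qed
  finally show ?thesis .
qed

lemma mix_fun:
  fixes Y Z :: "'a \<Rightarrow> real"
  assumes k: "k \<ge> 1"
    and Ym: "Y \<in> borel_measurable (SM {1..k})" and Zm: "Z \<in> borel_measurable (SM {k+g..})"
    and Yf: "finite (Y ` space M)" and Zf: "finite (Z ` space M)"
    and Ypos: "\<And>\<omega>. \<omega> \<in> space M \<Longrightarrow> 0 \<le> Y \<omega>"
    and Zb: "\<And>\<omega>. \<omega> \<in> space M \<Longrightarrow> 0 \<le> Z \<omega> \<and> Z \<omega> \<le> K"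
  shows "(\<integral>\<omega>. Y \<omega> * Z \<omega> \<partial>M) \<le> (\<integral>\<omega>. Y \<omega> \<partial>M) * ((\<integral>\<omega>. Z \<omega> \<partial>M) + K * phi_mix M X g)"
proof -
  define RY where "RY = Y ` space M"
  define RZ where "RZ = Z ` space M"
  define A where "A y = Y -` {y} \<inter> space M" for y
  define B where "B z = Z -` {z} \<inter> space M" for z
  define \<phi> where "\<phi> = phi_mix M X g"
  have YM: "Y \<in> borel_measurable M" and ZM: "Z \<in> borel_measurable M"
    using SM_to_M Ym Zm by auto
  have Agen: "A y \<in> gen_sigma M X {1..k}" for y unfolding A_def by (rule SM_level[OF Ym]) auto
  have Bgen: "B T' \<in> gen_sigma M X {k+g..}" for T' unfolding B_def by (rule SM_level[OF Zm]) auto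
  have Aev: "A y \<in> sets M" for y using Agen gen_sub by auto
  have Bev: "B z \<in> sets M" for z using Bgen gen_sub by auto
  have fRY: "finite RY" and fRZ: "finite RZ" using Yf Zf by (auto simp: RY_def RZ_def)
  have Kpos: "0 \<le> K"
  proof -
    obtain \<omega> where "\<omega> \<in> space M" using not_empty by blast
    then show ?thesis using Zb by force
  qed
  have RYpos: "y \<in> RY \<Longrightarrow> 0 \<le> y" for y using Ypos by (auto simp: RY_def)
  have RZb: "z \<in> RZ \<Longrightarrow> 0 \<le> z \<and> z \<le> K" for z using Zb by (auto simp: RZ_def)
  have pw: "Y \<omega> * Z \<omega> = (\<Sum>y\<in>RY. \<Sum>z\<in>RZ. y * z * indicator (A y \<inter> B z) \<omega>)" if "\<omega> \<in> space M" for \<omega>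
  proof -
    have e1: "Y \<omega> = (\<Sum>y\<in>RY. y * indicator (A y) \<omega>)"
      unfolding RY_def A_def by (rule fin_rep[OF Yf that])
    have e2: "Z \<omega> = (\<Sum>z\<in>RZ. z * indicator (B z) \<omega>)"
      unfolding RZ_def B_def by (rule fin_rep[OF Zf that])
    have "Y \<omega> * Z \<omega> = (\<Sum>y\<in>RY. y * indicator (A y) \<omega>) * (\<Sum>z\<in>RZ. z * indicator (B z) \<omega>)"
      by (simp only: e1[symmetric] e2[symmetric])
    also have "\<dots> = (\<Sum>y\<in>RY. \<Sum>z\<in>RZ. y * z * indicator (A y \<inter> B z) \<omega>)"
      unfolding sum_product indicator_inter_arith by (intro sum.cong refl) (simp add: mult_ac)
    finally show ?thesis .
  qed
  have EYZ: "(\<integral>\<omega>. Y \<omega> * Z \<omega> \<partial>M) = (\<Sum>y\<in>RY. \<Sum>z\<in>RZ. y * z * prob (A y \<inter> B z))"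
  proof -
    have "(\<integral>\<omega>. Y \<omega> * Z \<omega> \<partial>M) = (\<integral>\<omega>. (\<Sum>y\<in>RY. \<Sum>z\<in>RZ. y * z * indicator (A y \<inter> B z) \<omega>) \<partial>M)"
      by (rule Bochner_Integration.integral_cong[OF refl pw])
    also have "\<dots> = (\<Sum>y\<in>RY. \<Sum>z\<in>RZ. y * z * prob (A y \<inter> B z))"
    proof -
      have ABs: "A y \<inter> B z \<inter> space M = A y \<inter> B z" for y z by (auto simp: A_def B_def)
      have ii0: "integrable M (indicator (A y \<inter> B z) :: 'a \<Rightarrow> real)" for y z
        using Aev Bev by (intro integrable_real_indicator) (auto simp: emeasure_finite less_top[symmetric])
      have ii: "integrable M (\<lambda>\<omega>. y * z * indicator (A y \<inter> B z) \<omega>)" for y z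
        using ii0 by (intro integrable_mult_right) auto
      have i1: "(\<integral>\<omega>. y * z * indicator (A y \<inter> B z) \<omega> \<partial>M) = y * z * prob (A y \<inter> B z)" for y z
        by (simp add: ABs)
      have i2: "(\<integral>\<omega>. (\<Sum>z\<in>RZ. y * z * indicator (A y \<inter> B z) \<omega>) \<partial>M) = (\<Sum>z\<in>RZ. y * z * prob (A y \<inter> B z))" for y
        by (subst Bochner_Integration.integral_sum) (auto intro: ii ii0 simp: ABs)
      show ?thesis
        by (subst Bochner_Integration.integral_sum) (auto intro!: ii simp: i2)
    qed
    finally show ?thesis .
  qed
  have EY: "(\<integral>\<omega>. Y \<omega> \<partial>M) = (\<Sum>y\<in>RY. y * prob (A y))"
    using integral_fin[OF YM Yf] by (simp add: RY_def A_def)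
  have EZ: "(\<integral>\<omega>. Z \<omega> \<partial>M) = (\<Sum>z\<in>RZ. z * prob (B z))"
    using integral_fin[OF ZM Zf] by (simp add: RZ_def B_def)
  have inner: "(\<Sum>z\<in>RZ. z * prob (A y \<inter> B z)) \<le> prob (A y) * ((\<Sum>z\<in>RZ. z * prob (B z)) + K * \<phi>)" for y
  proof -
    define D where "D z = prob (A y \<inter> B z) - prob (A y) * prob (B z)" for z
    define S where "S = {z \<in> RZ. D z > 0}"
    have fS: "finite S" using fRZ by (simp add: S_def)
    have SR: "S \<subseteq> RZ" by (auto simp: S_def)
    have "(\<Sum>z\<in>RZ. z * D z) = (\<Sum>z\<in>S. z * D z) + (\<Sum>z\<in>RZ - S. z * D z)"
      using sum.subset_diff[OF SR fRZ, of "\<lambda>z. z * D z"] by simp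
    also have "(\<Sum>z\<in>RZ - S. z * D z) \<le> 0"
      by (intro sum_nonpos) (auto simp: S_def intro!: mult_nonneg_nonpos dest: RZb)
    also have "(\<Sum>z\<in>S. z * D z) \<le> (\<Sum>z\<in>S. K * D z)"
      by (intro sum_mono mult_right_mono) (auto simp: S_def dest: RZb)
    also have "(\<Sum>z\<in>S. K * D z) = K * (prob (A y \<inter> (\<Union>z\<in>S. B z)) - prob (A y) * prob (\<Union>z\<in>S. B z))"
    proof -
      have dj: "disjoint_family_on B S" "disjoint_family_on (\<lambda>z. A y \<inter> B z) S"
        by (auto simp: disjoint_family_on_def B_def)
      have "prob (\<Union>z\<in>S. B z) = (\<Sum>z\<in>S. prob (B z))"
        using fS dj Bev by (intro finite_measure_finite_Union) auto
      moreover have "prob (\<Union>z\<in>S. A y \<inter> B z) = (\<Sum>z\<in>S. prob (A y \<inter> B z))"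
        using fS dj Bev Aev by (intro finite_measure_finite_Union) auto
      ultimately show ?thesis
        unfolding D_def sum_distrib_left[symmetric] sum_subtractf Int_UN_distrib by simp
    qed
    also have "\<dots> \<le> K * (prob (A y) * \<phi>)"
    proof -
      have "(\<Union>z\<in>S. B z) = Z -` S \<inter> space M" by (auto simp: B_def)
      then have "(\<Union>z\<in>S. B z) \<in> gen_sigma M X {k+g..}" using SM_level[OF Zm fS] by simp
      then have "\<bar>prob (A y \<inter> (\<Union>z\<in>S. B z)) - prob (A y) * prob (\<Union>z\<in>S. B z)\<bar> \<le> prob (A y) * \<phi>"
        unfolding \<phi>_def by (intro event_mix[OF k Agen])
      then show ?thesis using Kpos by (intro mult_left_mono) auto
    qed
    finally have "(\<Sum>z\<in>RZ. z * D z) \<le> K * (prob (A y) * \<phi>)" by simp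
    note calc = this
    moreover have eqD: "(\<Sum>z\<in>RZ. z * D z) = (\<Sum>z\<in>RZ. z * prob (A y \<inter> B z)) - prob (A y) * (\<Sum>z\<in>RZ. z * prob (B z))"
      unfolding D_def right_diff_distrib sum_subtractf by (simp add: sum_distrib_left mult.left_commute)
    ultimately show ?thesis proof -
      have "prob (A y) * ((\<Sum>z\<in>RZ. z * prob (B z)) + K * \<phi>) = prob (A y) * (\<Sum>z\<in>RZ. z * prob (B z)) + K * (prob (A y) * \<phi>)"
        by (simp add: algebra_simps)
      then show ?thesis using calc eqD by linarith
    qed
  qed
  have "(\<Sum>y\<in>RY. \<Sum>z\<in>RZ. y * z * prob (A y \<inter> B z)) = (\<Sum>y\<in>RY. y * (\<Sum>z\<in>RZ. z * prob (A y \<inter> B z)))"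
    by (simp add: sum_distrib_left mult.assoc)
  also have "\<dots> \<le> (\<Sum>y\<in>RY. y * (prob (A y) * ((\<Sum>z\<in>RZ. z * prob (B z)) + K * \<phi>)))"
    by (intro sum_mono mult_left_mono inner) (auto dest: RYpos)
  also have "\<dots> = (\<Sum>y\<in>RY. y * prob (A y)) * ((\<Sum>z\<in>RZ. z * prob (B z)) + K * \<phi>)"
    by (simp add: sum_distrib_right mult.assoc)
  finally show ?thesis using EYZ EY EZ \<phi>_def by simp
qed


lemma int_bdd:
  fixes f :: "'a \<Rightarrow> real"
  assumes "f \<in> borel_measurable M" "\<And>\<omega>. \<omega> \<in> space M \<Longrightarrow> \<bar>f \<omega>\<bar> \<le> B"
  shows "integrable M f"
  using assms by (intro integrable_const_bound[where B=B]) auto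

definition Aset :: "real \<Rightarrow> nat \<Rightarrow> 'a set" where
  "Aset x i = {\<omega> \<in> space M. X i \<omega> \<le> x}"

definition xi :: "real \<Rightarrow> nat \<Rightarrow> 'a \<Rightarrow> real" where
  "xi x i \<omega> = (if X i \<omega> \<le> x then 1 else 0) - F x"

lemma Aset_gen: "i \<in> I \<Longrightarrow> Aset x i \<in> gen_sigma M X I"
proof -
  assume "i \<in> I"
  moreover have "{..x} \<in> sets borel" by simp
  ultimately have "X i -` {..x} \<inter> space M \<in> gens I" unfolding gens_def by blast
  moreover have "X i -` {..x} \<inter> space M = Aset x i" by (auto simp: Aset_def)
  ultimately have "Aset x i \<in> gens I" by simp
  then show ?thesis unfolding gen_sigma_def gens_def[symmetric] by (rule sigma_sets.Basic)
qed

lemma Aset_sets: "Aset x i \<in> sets M"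
  by (rule subsetD[OF gen_sub Aset_gen[of i "{i}"]]) simp

lemma F_prob: "i \<ge> 1 \<Longrightarrow> prob (Aset x i) = F x"
  unfolding Aset_def by (rule marg)

lemma F_01: "0 \<le> F x" "F x \<le> 1"
  using F_prob[of 1 x] measure_nonneg[of M "Aset x 1"] prob_le_1[of "Aset x 1"] by auto

lemma xi_ind: "\<omega> \<in> space M \<Longrightarrow> xi x i \<omega> = indicator (Aset x i) \<omega> - F x"
  by (simp add: xi_def Aset_def indicator_def)

lemma xi_bd: "\<bar>xi x i \<omega>\<bar> \<le> 1"
  using F_01[of x] by (simp add: xi_def)

lemma xi_SM: "i \<in> I \<Longrightarrow> xi x i \<in> borel_measurable (SM I)"
  unfolding xi_def using X_SM[of i I] by measurable

lemma xi_meas: "xi x i \<in> borel_measurable M"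
  unfolding xi_def using rv[of i] by measurable

lemma xi_int: "integrable M (xi x i)"
  by (rule int_bdd[OF xi_meas xi_bd])

lemma ind_int: "integrable M (indicator (Aset x i) :: 'a \<Rightarrow> real)"
  using Aset_sets by (intro integrable_real_indicator) (auto simp: emeasure_finite less_top[symmetric])

lemma xi_mean: "i \<ge> 1 \<Longrightarrow> (\<integral>\<omega>. xi x i \<omega> \<partial>M) = 0"
proof -
  assume i: "i \<ge> 1"
  have "(\<integral>\<omega>. xi x i \<omega> \<partial>M) = (\<integral>\<omega>. indicator (Aset x i) \<omega> - F x \<partial>M)"
    by (rule Bochner_Integration.integral_cong[OF refl xi_ind])
  also have "\<dots> = prob (Aset x i) - F x"
    using ind_int Aset_sets by (simp add: Bochner_Integration.integral_diff prob_space Int_absorb2 sets.sets_into_space)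
  finally show ?thesis using F_prob[OF i] by simp
qed

lemma cov_bd:
  assumes "1 \<le> i" "i < j"
  shows "\<bar>\<integral>\<omega>. xi x i \<omega> * xi x j \<omega> \<partial>M\<bar> \<le> phi_mix M X (j - i)"
proof -
  let ?A = "Aset x i" and ?B = "Aset x j"
  have "(\<integral>\<omega>. xi x i \<omega> * xi x j \<omega> \<partial>M)
     = (\<integral>\<omega>. indicator (?A \<inter> ?B) \<omega> - (F x * indicator ?A \<omega> + F x * indicator ?B \<omega>) + (F x)\<^sup>2 \<partial>M)"
  proof (rule Bochner_Integration.integral_cong[OF refl])
    fix \<omega> assume w: "\<omega> \<in> space M"
    have "xi x i \<omega> * xi x j \<omega> = (indicator ?A \<omega> - F x) * (indicator ?B \<omega> - F x)"
      by (simp only: xi_ind[OF w])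
    also have "\<dots> = indicator (?A \<inter> ?B) \<omega> - (F x * indicator ?A \<omega> + F x * indicator ?B \<omega>) + (F x)\<^sup>2"
      unfolding indicator_inter_arith by (simp add: power2_eq_square algebra_simps)
    finally show "xi x i \<omega> * xi x j \<omega> = indicator (?A \<inter> ?B) \<omega> - (F x * indicator ?A \<omega> + F x * indicator ?B \<omega>) + (F x)\<^sup>2" .
  qed
  also have "\<dots> = prob (?A \<inter> ?B) - (F x * prob ?A + F x * prob ?B) + (F x)\<^sup>2"
  proof -
    have "integrable M (indicator (?A \<inter> ?B) :: 'a \<Rightarrow> real)"
      using Aset_sets by (intro integrable_real_indicator) (auto simp: emeasure_finite less_top[symmetric])
    moreover have "?A \<inter> ?B \<inter> space M = ?A \<inter> ?B" "?A \<inter> space M = ?A" "?B \<inter> space M = ?B"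
      by (auto simp: Aset_def)
    ultimately show ?thesis using ind_int[of x i] ind_int[of x j]
      by (simp add: Bochner_Integration.integral_diff Bochner_Integration.integral_add prob_space)
  qed
  also have "\<dots> = prob (?A \<inter> ?B) - prob ?A * prob ?B"
    using F_prob[of i x] F_prob[of j x] assms by (simp add: power2_eq_square)
  finally have eq: "(\<integral>\<omega>. xi x i \<omega> * xi x j \<omega> \<partial>M) = prob (?A \<inter> ?B) - prob ?A * prob ?B" .
  have "?A \<in> gen_sigma M X {1..i}" using assms by (intro Aset_gen) auto
  moreover have "?B \<in> gen_sigma M X {i + (j - i)..}" using assms by (intro Aset_gen) auto
  ultimately have "\<bar>prob (?A \<inter> ?B) - prob ?A * prob ?B\<bar> \<le> prob ?A * phi_mix M X (j - i)"
    using assms by (intro event_mix) auto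
  also have "\<dots> \<le> phi_mix M X (j - i)"
    using phi_mix_nonneg[of "j - i"] by (intro mult_left_le_one_le) auto
  finally show ?thesis using eq by simp
qed


lemma abs_int_le:
  fixes f :: "'a \<Rightarrow> real"
  assumes "f \<in> borel_measurable M" "\<And>\<omega>. \<omega> \<in> space M \<Longrightarrow> \<bar>f \<omega>\<bar> \<le> B"
  shows "\<bar>integral\<^sup>L M f\<bar> \<le> B"
proof -
  have "\<bar>integral\<^sup>L M f\<bar> \<le> (\<integral>\<omega>. \<bar>f \<omega>\<bar> \<partial>M)"
    using integral_abs_bound[of M f] by simp
  also have "\<dots> \<le> (\<integral>\<omega>. B \<partial>M)"
  proof (rule integral_mono)
    show "integrable M (\<lambda>\<omega>. \<bar>f \<omega>\<bar>)" using int_bdd[OF assms] by simp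
  qed (use assms in auto)
  also have "\<dots> = B" by (simp add: prob_space)
  finally show ?thesis .
qed

lemma phi_le_sqrt: "phi_mix M X k \<le> sqrt (phi_mix M X k)"
proof -
  let ?p = "phi_mix M X k"
  have p: "0 \<le> ?p" "?p \<le> 1" using phi_mix_nonneg phi_mix_le1 by auto
  have "?p = sqrt ?p * sqrt ?p" using p by simp
  also have "\<dots> \<le> sqrt ?p * 1" using p by (intro mult_left_mono) auto
  finally show ?thesis by simp
qed

lemma phi_summable: "summable (\<lambda>k. phi_mix M X (Suc k))"
  by (rule summable_comparison_test[OF _ summ]) (use phi_mix_nonneg phi_le_sqrt in auto)

definition V :: real where "V = 1 + 2 * (\<Sum>k. phi_mix M X (Suc k))"

lemma phisum_nonneg: "0 \<le> (\<Sum>k. phi_mix M X (Suc k))"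
  by (rule suminf_nonneg[OF phi_summable]) (simp add: phi_mix_nonneg)

lemma V_ge1: "V \<ge> 1" using phisum_nonneg by (simp add: V_def)

definition cb :: "nat \<Rightarrow> nat \<Rightarrow> real" where
  "cb i j = (if i = j then 1 else if i < j then phi_mix M X (j - i) else phi_mix M X (i - j))"

lemma cov_all:
  assumes "1 \<le> i" "1 \<le> j"
  shows "\<bar>\<integral>\<omega>. xi x i \<omega> * xi x j \<omega> \<partial>M\<bar> \<le> cb i j"
proof (cases "i = j")
  case True
  have "\<bar>\<integral>\<omega>. xi x i \<omega> * xi x j \<omega> \<partial>M\<bar> \<le> 1"
    using xi_meas xi_bd by (intro abs_int_le) (auto simp: abs_mult intro: mult_le_one)
  then show ?thesis using True by (simp add: cb_def)
next
  case False
  show ?thesis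
  proof (cases "i < j")
    case True then show ?thesis using cov_bd[OF assms(1) True, of x] False by (simp add: cb_def)
  next
    case False': False
    then have "j < i" using False by simp
    then show ?thesis using cov_bd[OF assms(2) \<open>j < i\<close>, of x] False False'
      by (simp add: cb_def mult.commute)
  qed
qed

lemma side_sum:
  assumes "finite A" "inj_on h A" "\<And>j. j \<in> A \<Longrightarrow> g j = phi_mix M X (Suc (h j))"
  shows "(\<Sum>j\<in>A. g j) \<le> (\<Sum>k. phi_mix M X (Suc k))"
proof -
  have "(\<Sum>j\<in>A. g j) = (\<Sum>j\<in>A. phi_mix M X (Suc (h j)))" using assms(3) by simp
  also have "\<dots> = (\<Sum>k\<in>h ` A. phi_mix M X (Suc k))"
    using sum.reindex[OF assms(2), of "\<lambda>k. phi_mix M X (Suc k)"] by simp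
  also have "\<dots> \<le> (\<Sum>k. phi_mix M X (Suc k))"
    using assms(1) by (intro sum_le_suminf phi_summable) (auto simp: phi_mix_nonneg)
  finally show ?thesis .
qed

lemma row_sum:
  assumes "finite B"
  shows "(\<Sum>j\<in>B. cb i j) \<le> V"
proof -
  define B1 where "B1 = {j \<in> B. j < i}"
  define B2 where "B2 = {j \<in> B. i < j}"
  have fin: "finite B1" "finite B2" using assms by (auto simp: B1_def B2_def)
  have "(\<Sum>j\<in>B. cb i j) = (\<Sum>j\<in>B. (if j = i then 1 else 0) + (if j < i then phi_mix M X (i - j) else 0)
      + (if i < j then phi_mix M X (j - i) else 0))"
    by (intro sum.cong refl) (auto simp: cb_def)
  also have "\<dots> = (\<Sum>j\<in>B. if j = i then 1 else 0) + (\<Sum>j\<in>B1. phi_mix M X (i - j)) + (\<Sum>j\<in>B2. phi_mix M X (j - i))"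
    using assms by (simp add: sum.distrib sum.inter_filter B1_def B2_def)
  also have "(\<Sum>j\<in>B. if j = i then (1::real) else 0) \<le> 1"
    using assms by (simp add: sum.delta)
  also have "(\<Sum>j\<in>B1. phi_mix M X (i - j)) \<le> (\<Sum>k. phi_mix M X (Suc k))"
    by (rule side_sum[OF fin(1), where h="\<lambda>j. i - j - 1"]) (auto simp: B1_def inj_on_def Suc_diff_Suc)
  also have "(\<Sum>j\<in>B2. phi_mix M X (j - i)) \<le> (\<Sum>k. phi_mix M X (Suc k))"
    by (rule side_sum[OF fin(2), where h="\<lambda>j. j - i - 1"]) (auto simp: B2_def inj_on_def Suc_diff_Suc)
  finally show ?thesis by (simp add: V_def)
qed

definition Sx :: "real \<Rightarrow> nat set \<Rightarrow> 'a \<Rightarrow> real" where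
  "Sx x B \<omega> = (\<Sum>i\<in>B. xi x i \<omega>)"

lemma Sx_meas: "Sx x B \<in> borel_measurable M"
  unfolding Sx_def using xi_meas by (intro borel_measurable_sum) auto

lemma Sx_bd: "finite B \<Longrightarrow> \<bar>Sx x B \<omega>\<bar> \<le> card B"
proof -
  assume "finite B"
  have "\<bar>Sx x B \<omega>\<bar> \<le> (\<Sum>i\<in>B. \<bar>xi x i \<omega>\<bar>)" unfolding Sx_def by (rule sum_abs)
  also have "\<dots> \<le> (\<Sum>i\<in>B. 1)" by (intro sum_mono xi_bd)
  finally show ?thesis by simp
qed

lemma var_bd:
  assumes "finite B" "B \<subseteq> {1..}"
  shows "(\<integral>\<omega>. (Sx x B \<omega>)\<^sup>2 \<partial>M) \<le> card B * V"
proof -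
  have pint: "integrable M (\<lambda>\<omega>. xi x i \<omega> * xi x j \<omega>)" for i j
    using xi_meas xi_bd by (intro int_bdd[where B=1]) (auto simp: abs_mult intro: mult_le_one)
  have "(\<integral>\<omega>. (Sx x B \<omega>)\<^sup>2 \<partial>M) = (\<integral>\<omega>. (\<Sum>i\<in>B. \<Sum>j\<in>B. xi x i \<omega> * xi x j \<omega>) \<partial>M)"
    unfolding Sx_def power2_eq_square sum_product by simp
  also have "\<dots> = (\<Sum>i\<in>B. \<Sum>j\<in>B. (\<integral>\<omega>. xi x i \<omega> * xi x j \<omega> \<partial>M))"
    using pint by (simp add: Bochner_Integration.integral_sum integrable_sum)
  also have "\<dots> \<le> (\<Sum>i\<in>B. \<Sum>j\<in>B. cb i j)"
  proof (intro sum_mono)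
    fix i j assume "i \<in> B" "j \<in> B"
    then have "\<bar>\<integral>\<omega>. xi x i \<omega> * xi x j \<omega> \<partial>M\<bar> \<le> cb i j" using assms by (intro cov_all) auto
    then show "(\<integral>\<omega>. xi x i \<omega> * xi x j \<omega> \<partial>M) \<le> cb i j" by simp
  qed
  also have "\<dots> \<le> (\<Sum>i\<in>B. V)" by (intro sum_mono row_sum assms)
  finally show ?thesis by simp
qed

lemma exp_quad:
  fixes u :: real
  assumes "\<bar>u\<bar> \<le> 1/4"
  shows "exp u \<le> 1 + u + 3/4 * u\<^sup>2"
proof -
  obtain \<tau> where t: "\<bar>\<tau>\<bar> \<le> \<bar>u\<bar>" and e: "exp u = (\<Sum>m<2. u ^ m / fact m) + exp \<tau> / fact 2 * u ^ 2"
    using Maclaurin_exp_le[of u 2] by blast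
  have "exp \<tau> \<le> exp \<bar>\<tau>\<bar>" by simp
  also have "exp \<bar>\<tau>\<bar> \<le> 1 + 2 * \<bar>\<tau>\<bar>"
    using exp_bound_lemma[of "\<bar>\<tau>\<bar>"] t assms by simp
  finally have "exp \<tau> \<le> 3/2" using t assms by linarith
  then have "exp \<tau> * u\<^sup>2 \<le> 3/2 * u\<^sup>2" by (intro mult_right_mono) auto
  then have "exp \<tau> / fact 2 * u ^ 2 \<le> 3/4 * u\<^sup>2"
    by (simp add: fact_numeral)
  moreover have "(\<Sum>m<2. u ^ m / fact m) = 1 + u" by (simp add: numeral_2_eq_2)
  ultimately show ?thesis using e by simp
qed

lemma blk_mgf:
  fixes t s :: real
  assumes "finite B" "B \<subseteq> {1..}" "0 \<le> t" "t * card B \<le> 1/4" "\<bar>s\<bar> = 1"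
  shows "(\<integral>\<omega>. exp (t * (s * Sx x B \<omega>)) \<partial>M) \<le> 1 + 3/4 * t\<^sup>2 * (card B * V)"
proof -
  have ub: "\<bar>t * (s * Sx x B \<omega>)\<bar> \<le> 1/4" for \<omega>
  proof -
    have "\<bar>t * (s * Sx x B \<omega>)\<bar> = t * \<bar>Sx x B \<omega>\<bar>" using assms by (simp add: abs_mult)
    also have "\<dots> \<le> t * card B" using assms Sx_bd[OF assms(1)] by (intro mult_left_mono) auto
    finally show ?thesis using assms by linarith
  qed
  have m1: "(\<lambda>\<omega>. t * (s * Sx x B \<omega>)) \<in> borel_measurable M" using Sx_meas by simp
  have i1: "integrable M (\<lambda>\<omega>. t * (s * Sx x B \<omega>))" by (rule int_bdd[OF m1 ub])
  have i2: "integrable M (\<lambda>\<omega>. (Sx x B \<omega>)\<^sup>2)"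
  proof (rule int_bdd[where B="real (card B) ^ 2"])
    fix \<omega>
    have "\<bar>Sx x B \<omega>\<bar> ^ 2 \<le> real (card B) ^ 2" using Sx_bd[OF assms(1)] by (intro power_mono) auto
    then show "\<bar>(Sx x B \<omega>)\<^sup>2\<bar> \<le> real (card B) ^ 2" by simp
  qed (use Sx_meas in simp)
  have i3: "integrable M (\<lambda>\<omega>. exp (t * (s * Sx x B \<omega>)))"
  proof (rule int_bdd[where B="exp (1/4)"])
    show "\<bar>exp (t * (s * Sx x B \<omega>))\<bar> \<le> exp (1/4)" for \<omega> using ub[of \<omega>] by simp
  qed (use Sx_meas in simp)
  have mean: "(\<integral>\<omega>. t * (s * Sx x B \<omega>) \<partial>M) = 0"
  proof -
    have "(\<integral>\<omega>. Sx x B \<omega> \<partial>M) = (\<Sum>i\<in>B. \<integral>\<omega>. xi x i \<omega> \<partial>M)"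
      unfolding Sx_def using xi_int by (simp add: Bochner_Integration.integral_sum)
    also have "\<dots> = 0" using assms(2) xi_mean by (intro sum.neutral) auto
    finally show ?thesis by simp
  qed
  have "(\<integral>\<omega>. exp (t * (s * Sx x B \<omega>)) \<partial>M) \<le> (\<integral>\<omega>. 1 + t * (s * Sx x B \<omega>) + 3/4 * t\<^sup>2 * (Sx x B \<omega>)\<^sup>2 \<partial>M)"
  proof (rule integral_mono[OF i3])
    show "integrable M (\<lambda>\<omega>. 1 + t * (s * Sx x B \<omega>) + 3/4 * t\<^sup>2 * (Sx x B \<omega>)\<^sup>2)"
      using i1 i2 by auto
    fix \<omega>
    have "exp (t * (s * Sx x B \<omega>)) \<le> 1 + t * (s * Sx x B \<omega>) + 3/4 * (t * (s * Sx x B \<omega>))\<^sup>2"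
      by (rule exp_quad[OF ub])
    also have "(t * (s * Sx x B \<omega>))\<^sup>2 = t\<^sup>2 * (Sx x B \<omega>)\<^sup>2"
    proof -
      have "s\<^sup>2 = \<bar>s\<bar>\<^sup>2" by simp
      then have "s\<^sup>2 = 1" using assms(5) by simp
      then show ?thesis by (simp add: power_mult_distrib)
    qed
    finally show "exp (t * (s * Sx x B \<omega>)) \<le> 1 + t * (s * Sx x B \<omega>) + 3/4 * t\<^sup>2 * (Sx x B \<omega>)\<^sup>2"
      by (simp add: mult.assoc)
  qed
  also have "\<dots> = 1 + 0 + 3/4 * t\<^sup>2 * (\<integral>\<omega>. (Sx x B \<omega>)\<^sup>2 \<partial>M)"
    using i1 i2 mean by (simp add: Bochner_Integration.integral_add prob_space)
  also have "\<dots> \<le> 1 + 3/4 * t\<^sup>2 * (card B * V)"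
    using var_bd[OF assms(1,2), of x] by (intro add_mono mult_left_mono) auto
  finally show ?thesis .
qed


abbreviation fr :: "('a \<Rightarrow> real) \<Rightarrow> bool" where "fr f \<equiv> finite (f ` space M)"

lemma fr_comp: "fr f \<Longrightarrow> fr (\<lambda>\<omega>. h (f \<omega>))"
proof -
  assume "fr f"
  then have "finite (h ` (f ` space M))" by (rule finite_imageI)
  moreover have "h ` (f ` space M) = (\<lambda>\<omega>. h (f \<omega>)) ` space M" by (simp add: image_image)
  ultimately show ?thesis by simp
qed

lemma fr_bin:
  assumes "fr f" "fr g"
  shows "fr (\<lambda>\<omega>. h (f \<omega>) (g \<omega>))"
proof -
  have "(\<lambda>\<omega>. h (f \<omega>) (g \<omega>)) ` space M \<subseteq> (\<lambda>(a, b). h a b) ` (f ` space M \<times> g ` space M)"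
    by auto
  moreover have "finite ((\<lambda>(a, b). h a b) ` (f ` space M \<times> g ` space M))"
    by (intro finite_imageI finite_cartesian_product assms)
  ultimately show ?thesis by (rule finite_subset)
qed

lemma fr_sum: "finite I \<Longrightarrow> (\<And>i. i \<in> I \<Longrightarrow> fr (f i)) \<Longrightarrow> fr (\<lambda>\<omega>. \<Sum>i\<in>I. f i \<omega>)"
proof (induction I rule: finite_induct)
  case empty then show ?case by (simp add: image_constant_conv)
next
  case (insert a I)
  have fa: "fr (f a)" using insert.prems by simp
  have fI: "fr (\<lambda>\<omega>. \<Sum>i\<in>I. f i \<omega>)" using insert.IH insert.prems by simp
  have h: "fr (\<lambda>\<omega>. f a \<omega> + (\<Sum>i\<in>I. f i \<omega>))"
    using fr_bin[OF fa fI, of "(+)"] by simp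
  have e: "(\<lambda>\<omega>. \<Sum>i\<in>insert a I. f i \<omega>) = (\<lambda>\<omega>. f a \<omega> + (\<Sum>i\<in>I. f i \<omega>))"
    using insert.hyps by simp
  show ?case unfolding e by (rule h)
qed

lemma fr_prod: "finite I \<Longrightarrow> (\<And>i. i \<in> I \<Longrightarrow> fr (f i)) \<Longrightarrow> fr (\<lambda>\<omega>. \<Prod>i\<in>I. f i \<omega>)"
proof (induction I rule: finite_induct)
  case empty then show ?case by (simp add: image_constant_conv)
next
  case (insert a I)
  have fa: "fr (f a)" using insert.prems by simp
  have fI: "fr (\<lambda>\<omega>. \<Prod>i\<in>I. f i \<omega>)" using insert.IH insert.prems by simp
  have h: "fr (\<lambda>\<omega>. f a \<omega> * (\<Prod>i\<in>I. f i \<omega>))"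
    using fr_bin[OF fa fI, of "(*)"] by simp
  have e: "(\<lambda>\<omega>. \<Prod>i\<in>insert a I. f i \<omega>) = (\<lambda>\<omega>. f a \<omega> * (\<Prod>i\<in>I. f i \<omega>))"
    using insert.hyps by simp
  show ?case unfolding e by (rule h)
qed

lemma fr_xi: "fr (xi x i)"
proof -
  have "xi x i ` space M \<subseteq> {1 - F x, - F x}" by (auto simp: xi_def)
  then show ?thesis by (rule finite_subset) simp
qed

lemma fr_Sx: "finite B \<Longrightarrow> fr (Sx x B)"
  unfolding Sx_def by (intro fr_sum fr_xi)

lemma Sx_SM: "B \<subseteq> I \<Longrightarrow> Sx x B \<in> borel_measurable (SM I)"
  unfolding Sx_def using xi_SM by (intro borel_measurable_sum) auto

definition blk :: "nat \<Rightarrow> nat \<Rightarrow> nat \<Rightarrow> nat \<Rightarrow> nat set" where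
  "blk n q r m = {i \<in> {1..n}. (i - 1) div q = 2 * m + r}"

lemma blk_fin: "finite (blk n q r m)" by (simp add: blk_def)

lemma blk_pos: "blk n q r m \<subseteq> {1..}" by (auto simp: blk_def)

lemma blk_lo: "q \<ge> 1 \<Longrightarrow> i \<in> blk n q r m \<Longrightarrow> (2 * m + r) * q + 1 \<le> i"
proof -
  assume q: "q \<ge> 1" and i: "i \<in> blk n q r m"
  then have "(i - 1) div q = 2 * m + r" "i \<ge> 1" by (auto simp: blk_def)
  moreover have "(i - 1) div q * q \<le> i - 1" by (rule div_times_less_eq_dividend)
  ultimately have "(2 * m + r) * q \<le> i - 1" by simp
  then show ?thesis using \<open>i \<ge> 1\<close> by linarith
qed

lemma blk_hi: "q \<ge> 1 \<Longrightarrow> i \<in> blk n q r m \<Longrightarrow> i \<le> (2 * m + r) * q + q"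
proof -
  assume q: "q \<ge> 1" and i: "i \<in> blk n q r m"
  then have d: "(i - 1) div q = 2 * m + r" "i \<ge> 1" by (auto simp: blk_def)
  have e1: "(i - 1) div q * q + (i - 1) mod q = i - 1" by (rule div_mult_mod_eq)
  have e2: "((i - 1) div q + 1) * q = (i - 1) div q * q + q" by (simp add: algebra_simps)
  have "(i - 1) mod q < q" using q by simp
  then have "i - 1 < ((i - 1) div q + 1) * q" using e1 e2 by linarith
  then have "i - 1 < (2 * m + r) * q + q" using d by (simp add: algebra_simps)
  then show ?thesis using d by linarith
qed

lemma blk_card: "q \<ge> 1 \<Longrightarrow> card (blk n q r m) \<le> q"
proof -
  assume q: "q \<ge> 1"
  have "blk n q r m \<subseteq> {(2 * m + r) * q + 1 .. (2 * m + r) * q + q}"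
    using blk_lo[OF q] blk_hi[OF q] by auto
  then have "card (blk n q r m) \<le> card {(2 * m + r) * q + 1 .. (2 * m + r) * q + q}"
    by (intro card_mono) auto
  then show ?thesis by simp
qed

lemma exp_quarter: "exp (1/4 :: real) \<le> 3/2"
  using exp_bound_lemma[of "1/4 :: real"] by simp

definition Zb :: "real \<Rightarrow> nat \<Rightarrow> nat \<Rightarrow> nat \<Rightarrow> real \<Rightarrow> real \<Rightarrow> nat \<Rightarrow> 'a \<Rightarrow> real" where
  "Zb x n q r t s m \<omega> = exp (t * (s * Sx x (blk n q r m) \<omega>))"

definition Pp :: "real \<Rightarrow> nat \<Rightarrow> nat \<Rightarrow> nat \<Rightarrow> real \<Rightarrow> real \<Rightarrow> nat \<Rightarrow> 'a \<Rightarrow> real" where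
  "Pp x n q r t s m \<omega> = (\<Prod>m'<m. Zb x n q r t s m' \<omega>)"

lemma Zb_bd:
  assumes "q \<ge> 1" "0 \<le> t" "t * q \<le> 1/4" "\<bar>s\<bar> = 1"
  shows "0 \<le> Zb x n q r t s m \<omega> \<and> Zb x n q r t s m \<omega> \<le> 3/2"
proof -
  have "\<bar>t * (s * Sx x (blk n q r m) \<omega>)\<bar> = t * \<bar>Sx x (blk n q r m) \<omega>\<bar>" using assms by (simp add: abs_mult)
  also have "\<dots> \<le> t * q"
  proof (intro mult_left_mono)
    show "\<bar>Sx x (blk n q r m) \<omega>\<bar> \<le> real q"
      using Sx_bd[OF blk_fin, of x n q r m \<omega>] blk_card[OF assms(1), of n r m] by linarith
  qed (use assms in auto)
  finally have "t * (s * Sx x (blk n q r m) \<omega>) \<le> 1/4" using assms by linarith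
  then have "Zb x n q r t s m \<omega> \<le> exp (1/4)" by (simp add: Zb_def)
  moreover have "0 \<le> Zb x n q r t s m \<omega>" by (simp add: Zb_def)
  ultimately show ?thesis using exp_quarter by linarith
qed

lemma Zb_meas: "blk n q r m \<subseteq> I \<Longrightarrow> Zb x n q r t s m \<in> borel_measurable (SM I)"
  unfolding Zb_def using Sx_SM[of "blk n q r m" I x] by measurable

lemma Pp_meas: "(\<And>m'. m' < m \<Longrightarrow> blk n q r m' \<subseteq> I) \<Longrightarrow> Pp x n q r t s m \<in> borel_measurable (SM I)"
  unfolding Pp_def by (intro borel_measurable_prod Zb_meas) auto

lemma fr_Zb: "fr (Zb x n q r t s m)"
  unfolding Zb_def by (intro fr_comp[where h="\<lambda>v. exp (t * (s * v))"] fr_Sx blk_fin)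

lemma fr_Pp: "fr (Pp x n q r t s m)"
  unfolding Pp_def by (intro fr_prod fr_Zb) auto

lemma prod_mgf:
  assumes q: "q \<ge> 1" and r: "r \<le> 1" and t: "0 \<le> t" "t * q \<le> 1/4" and s: "\<bar>s\<bar> = 1"
  shows "(\<integral>\<omega>. Pp x n q r t s m \<omega> \<partial>M)
     \<le> (\<Prod>m'<m. 1 + 3/4 * t\<^sup>2 * (card (blk n q r m') * V) + 3/2 * phi_mix M X (q + 1))"
proof (induction m)
  case 0
  then show ?case by (simp add: Pp_def prob_space)
next
  case (Suc m)
  let ?Y = "Pp x n q r t s m" and ?Z = "Zb x n q r t s m"
  let ?fac = "\<lambda>m'. 1 + 3/4 * t\<^sup>2 * (card (blk n q r m') * V) + 3/2 * phi_mix M X (q + 1)"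
  have tcard: "t * card (blk n q r m) \<le> 1/4"
  proof -
    have "t * card (blk n q r m) \<le> t * q" using blk_card[OF q, of n r m] t by (intro mult_left_mono) auto
    then show ?thesis using t by linarith
  qed
  have EZ: "(\<integral>\<omega>. ?Z \<omega> \<partial>M) \<le> 1 + 3/4 * t\<^sup>2 * (card (blk n q r m) * V)"
    unfolding Zb_def by (rule blk_mgf[OF blk_fin blk_pos t(1) tcard s])
  have phi0: "0 \<le> phi_mix M X (q + 1)" by (rule phi_mix_nonneg)
  have facpos: "0 \<le> ?fac m'" for m' using V_ge1 phi0 by simp
  have PpS: "Pp x n q r t s (Suc m) \<omega> = ?Y \<omega> * ?Z \<omega>" for \<omega>
    by (simp add: Pp_def)
  show ?case
  proof (cases "m = 0")
    case True
    have "(\<integral>\<omega>. Pp x n q r t s (Suc m) \<omega> \<partial>M) = (\<integral>\<omega>. ?Z \<omega> \<partial>M)"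
      using True by (simp add: Pp_def)
    also have "\<dots> \<le> ?fac m" using EZ phi0 by simp
    finally show ?thesis using True by simp
  next
    case False
    obtain m0 where m0: "m = Suc m0" using False by (cases m) auto
    define k where "k = (2 * m0 + 1 + r) * q"
    have k1: "k \<ge> 1" using q by (simp add: k_def)
    have Ym: "?Y \<in> borel_measurable (SM {1..k})"
    proof (rule Pp_meas)
      fix m' assume "m' < m"
      show "blk n q r m' \<subseteq> {1..k}"
      proof
        fix i assume i: "i \<in> blk n q r m'"
        have "i \<le> (2 * m' + r) * q + q" by (rule blk_hi[OF q i])
        also have "\<dots> = (2 * m' + r + 1) * q" by (simp add: algebra_simps)
        also have "\<dots> \<le> k" unfolding k_def using \<open>m' < m\<close> m0 by (intro mult_right_mono) auto
        finally show "i \<in> {1..k}" using i by (auto simp: blk_def)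
      qed
    qed
    have Zm: "?Z \<in> borel_measurable (SM {k + (q + 1)..})"
    proof (rule Zb_meas)
      show "blk n q r m \<subseteq> {k + (q + 1)..}"
      proof
        fix i assume i: "i \<in> blk n q r m"
        have "k + (q + 1) = (2 * m + r) * q + 1" using m0 by (simp add: k_def algebra_simps)
        then show "i \<in> {k + (q + 1)..}" using blk_lo[OF q i] by simp
      qed
    qed
    have Ypos: "0 \<le> ?Y \<omega>" for \<omega> unfolding Pp_def Zb_def by (intro prod_nonneg) auto
    have "(\<integral>\<omega>. Pp x n q r t s (Suc m) \<omega> \<partial>M) = (\<integral>\<omega>. ?Y \<omega> * ?Z \<omega> \<partial>M)"
      by (simp only: PpS)
    also have "\<dots> \<le> (\<integral>\<omega>. ?Y \<omega> \<partial>M) * ((\<integral>\<omega>. ?Z \<omega> \<partial>M) + 3/2 * phi_mix M X (q + 1))"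
      by (rule mix_fun[OF k1 Ym Zm fr_Pp fr_Zb Ypos Zb_bd[OF q t s]])
    also have "\<dots> \<le> (\<Prod>m'<m. ?fac m') * ?fac m"
    proof (rule mult_mono)
      show "(\<integral>\<omega>. ?Y \<omega> \<partial>M) \<le> (\<Prod>m'<m. ?fac m')" by (rule Suc.IH)
      show "(\<integral>\<omega>. ?Z \<omega> \<partial>M) + 3/2 * phi_mix M X (q + 1) \<le> ?fac m" using EZ by simp
      show "0 \<le> (\<Prod>m'<m. ?fac m')" by (intro prod_nonneg facpos)
      show "0 \<le> (\<integral>\<omega>. ?Z \<omega> \<partial>M) + 3/2 * phi_mix M X (q + 1)"
        using Zb_bd[OF q t s] phi0 by (intro add_nonneg_nonneg Bochner_Integration.integral_nonneg) auto
    qed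
    finally show ?thesis by simp
  qed
qed


definition Tr :: "real \<Rightarrow> nat \<Rightarrow> nat \<Rightarrow> nat \<Rightarrow> 'a \<Rightarrow> real" where
  "Tr x n q r \<omega> = (\<Sum>i\<in>{i \<in> {1..n}. (i - 1) div q mod 2 = r}. xi x i \<omega>)"

lemma Tr_meas: "Tr x n q r \<in> borel_measurable M"
  unfolding Tr_def using xi_meas by (intro borel_measurable_sum) auto

lemma Tr_split: "Sx x {1..n} \<omega> = Tr x n q 0 \<omega> + Tr x n q 1 \<omega>"
proof -
  have "Sx x {1..n} \<omega> = (\<Sum>i\<in>{1..n} \<inter> {i. (i - 1) div q mod 2 = 0}. xi x i \<omega>) + (\<Sum>i\<in>{1..n} - {i. (i - 1) div q mod 2 = 0}. xi x i \<omega>)"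
    unfolding Sx_def by (rule sum.Int_Diff) simp
  moreover have "{1..n} \<inter> {i. (i - 1) div q mod 2 = 0} = {i \<in> {1..n}. (i - 1) div q mod 2 = 0}" by auto
  moreover have "{1..n} - {i. (i - 1) div q mod 2 = 0} = {i \<in> {1..n}. (i - 1) div q mod 2 = 1}" by auto
  ultimately show ?thesis unfolding Tr_def by simp
qed

lemma parity_iff: "(r::nat) \<le> 1 \<Longrightarrow> (d mod 2 = r \<and> d div 2 = m) \<longleftrightarrow> d = 2 * m + r"
  by presburger

lemma Tr_blocks:
  assumes q: "q \<ge> 1" and r: "r \<le> 1" and L: "n div q < L"
  shows "Tr x n q r \<omega> = (\<Sum>m<L. Sx x (blk n q r m) \<omega>)"
proof -
  define S where "S = {i \<in> {1..n}. (i - 1) div q mod 2 = r}"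
  define g where "g i = (i - 1) div q div 2" for i
  have sub: "g ` S \<subseteq> {..<L}"
  proof
    fix m assume "m \<in> g ` S"
    then obtain i where i: "i \<in> S" "m = g i" by blast
    have "g i \<le> (i - 1) div q" by (simp add: g_def)
    also have "\<dots> \<le> n div q" using i by (intro div_le_mono) (auto simp: S_def)
    finally show "m \<in> {..<L}" using i L by simp
  qed
  have "(\<Sum>m<L. \<Sum>i\<in>{i. i \<in> S \<and> g i = m}. xi x i \<omega>) = (\<Sum>i\<in>S. xi x i \<omega>)"
    by (rule sum.group) (use sub in \<open>auto simp: S_def\<close>)
  moreover have "{i. i \<in> S \<and> g i = m} = blk n q r m" for m
    using parity_iff[OF r] by (auto simp: S_def g_def blk_def)
  ultimately show ?thesis by (simp add: Tr_def S_def Sx_def)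
qed

lemma blk_disj: "m \<noteq> m' \<Longrightarrow> blk n q r m \<inter> blk n q r m' = {}"
  by (auto simp: blk_def)

lemma blk_card_sum: "(\<Sum>m<L. card (blk n q r m)) \<le> n"
proof -
  have "(\<Sum>m<L. card (blk n q r m)) = card (\<Union>m<L. blk n q r m)"
    by (rule card_UN_disjoint[symmetric]) (auto simp: blk_fin blk_disj)
  also have "\<dots> \<le> card {1..n}" by (intro card_mono) (auto simp: blk_def)
  finally show ?thesis by simp
qed

lemma mgf_Tr:
  assumes q: "q \<ge> 1" and r: "r \<le> 1" and t: "0 \<le> t" "t * q \<le> 1/4" and s: "\<bar>s\<bar> = 1"
  shows "(\<integral>\<omega>. exp (t * (s * Tr x n q r \<omega>)) \<partial>M)
     \<le> exp (3/4 * t\<^sup>2 * V * n + real (n div q + 1) * (3/2 * phi_mix M X (q + 1)))"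
proof -
  define L where "L = n div q + 1"
  let ?b = "3/2 * phi_mix M X (q + 1)"
  let ?a = "\<lambda>m. 3/4 * t\<^sup>2 * (card (blk n q r m) * V)"
  have eq: "exp (t * (s * Tr x n q r \<omega>)) = Pp x n q r t s L \<omega>" for \<omega>
  proof -
    have "n div q < L" by (simp add: L_def)
    then have "t * (s * Tr x n q r \<omega>) = (\<Sum>m<L. t * (s * Sx x (blk n q r m) \<omega>))"
      using Tr_blocks[OF q r] by (simp add: sum_distrib_left)
    then show ?thesis by (simp add: Pp_def Zb_def exp_sum)
  qed
  have "(\<integral>\<omega>. exp (t * (s * Tr x n q r \<omega>)) \<partial>M) = (\<integral>\<omega>. Pp x n q r t s L \<omega> \<partial>M)"
    by (simp only: eq)
  also have "\<dots> \<le> (\<Prod>m<L. 1 + ?a m + ?b)"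
    by (rule prod_mgf[OF q r t s])
  also have "\<dots> \<le> (\<Prod>m<L. exp (?a m + ?b))"
  proof (rule prod_mono)
    fix m assume "m \<in> {..<L}"
    have "0 \<le> ?a m" using V_ge1 by simp
    moreover have "0 \<le> ?b" using phi_mix_nonneg by simp
    ultimately show "0 \<le> 1 + ?a m + ?b \<and> 1 + ?a m + ?b \<le> exp (?a m + ?b)"
      using exp_ge_add_one_self[of "?a m + ?b"] by linarith
  qed
  also have "\<dots> = exp (\<Sum>m<L. ?a m + ?b)" by (simp add: exp_sum)
  also have "\<dots> \<le> exp (3/4 * t\<^sup>2 * V * n + L * ?b)"
  proof -
    have "(\<Sum>m<L. ?a m + ?b) = 3/4 * t\<^sup>2 * V * (\<Sum>m<L. real (card (blk n q r m))) + L * ?b"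
      by (simp add: sum.distrib sum_distrib_left mult_ac)
    also have "(\<Sum>m<L. real (card (blk n q r m))) \<le> n"
      using blk_card_sum[where L=L and n=n and q=q and r=r] by (simp flip: of_nat_sum)
    then have "3/4 * t\<^sup>2 * V * (\<Sum>m<L. real (card (blk n q r m))) \<le> 3/4 * t\<^sup>2 * V * n"
      using V_ge1 by (intro mult_left_mono) auto
    finally show ?thesis by simp
  qed
  finally show ?thesis by (simp add: L_def)
qed

lemma chernoff_Tr:
  assumes q: "q \<ge> 1" and r: "r \<le> 1" and t: "0 < t" "t * q \<le> 1/4" and s: "\<bar>s\<bar> = 1"
  shows "prob {\<omega> \<in> space M. a \<le> s * Tr x n q r \<omega>}
     \<le> exp (- t * a + 3/4 * t\<^sup>2 * V * n + real (n div q + 1) * (3/2 * phi_mix M X (q + 1)))"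
proof -
  have int: "integrable M (\<lambda>\<omega>. exp (t * (s * Tr x n q r \<omega>)))"
  proof (rule int_bdd[where B="exp (1/4 * n)"])
    fix \<omega>
    have "\<bar>Tr x n q r \<omega>\<bar> \<le> n"
    proof -
      have "\<bar>Tr x n q r \<omega>\<bar> \<le> (\<Sum>i\<in>{i \<in> {1..n}. (i - 1) div q mod 2 = r}. \<bar>xi x i \<omega>\<bar>)"
        unfolding Tr_def by (rule sum_abs)
      also have "\<dots> \<le> (\<Sum>i\<in>{i \<in> {1..n}. (i - 1) div q mod 2 = r}. 1)" by (intro sum_mono xi_bd)
      also have "\<dots> = real (card {i \<in> {1..n}. (i - 1) div q mod 2 = r})" by simp
      also have "\<dots> \<le> card {1..n}" by (intro of_nat_mono card_mono) auto
      finally show ?thesis by simp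
    qed
    moreover have "t \<le> 1/4"
    proof -
      have "t * 1 \<le> t * real q" using t q by (intro mult_left_mono) auto
      then show ?thesis using t by linarith
    qed
    ultimately have "t * \<bar>Tr x n q r \<omega>\<bar> \<le> 1/4 * n"
      using t by (intro mult_mono) auto
    moreover have "t * (s * Tr x n q r \<omega>) \<le> t * \<bar>Tr x n q r \<omega>\<bar>"
    proof -
      have "s * Tr x n q r \<omega> \<le> \<bar>s * Tr x n q r \<omega>\<bar>" by (rule abs_ge_self)
      then have "s * Tr x n q r \<omega> \<le> \<bar>Tr x n q r \<omega>\<bar>" using s by (simp add: abs_mult)
      then show ?thesis using t by (intro mult_left_mono) auto
    qed
    ultimately have "t * (s * Tr x n q r \<omega>) \<le> 1/4 * n" by linarith
    then show "\<bar>exp (t * (s * Tr x n q r \<omega>))\<bar> \<le> exp (1/4 * n)" by simp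
  qed (use Tr_meas in simp)
  have "prob {\<omega> \<in> space M. a \<le> s * Tr x n q r \<omega>} \<le> exp (- t * a) * (\<integral>\<omega>\<in>space M. exp (t * (s * Tr x n q r \<omega>)) \<partial>M)"
  proof (rule Chernoff_ineq_ge[OF t(1)])
    show "set_integrable M (space M) (\<lambda>\<omega>. exp (t * (s * Tr x n q r \<omega>)))"
      unfolding set_integrable_def by (rule integrable_mult_indicator[OF sets.top int])
  qed simp
  also have "\<dots> = exp (- t * a) * (\<integral>\<omega>. exp (t * (s * Tr x n q r \<omega>)) \<partial>M)"
    using set_integral_space[OF int] by simp
  also have "\<dots> \<le> exp (- t * a) * exp (3/4 * t\<^sup>2 * V * n + real (n div q + 1) * (3/2 * phi_mix M X (q + 1)))"
    using mgf_Tr[OF q r _ t(2) s, where n=n and x=x] t by (intro mult_left_mono) auto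
  also have "\<dots> = exp (- t * a + 3/4 * t\<^sup>2 * V * n + real (n div q + 1) * (3/2 * phi_mix M X (q + 1)))"
    by (simp add: exp_add[symmetric] add.assoc)
  finally show ?thesis .
qed


definition SS :: real where "SS = (\<Sum>n. sqrt (phi_mix M X (Suc n)))"

lemma SS_nonneg: "0 \<le> SS"
  unfolding SS_def by (rule suminf_nonneg[OF summ]) (simp add: phi_mix_nonneg)

lemma phi_decay:
  assumes k: "k \<ge> 1"
  shows "phi_mix M X k \<le> SS\<^sup>2 / (real k)\<^sup>2"
proof -
  have "real k * sqrt (phi_mix M X k) = (\<Sum>j<k. sqrt (phi_mix M X k))" by simp
  also have "\<dots> \<le> (\<Sum>j<k. sqrt (phi_mix M X (Suc j)))"
  proof (intro sum_mono)
    fix j assume "j \<in> {..<k}"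
    then have "Suc j \<le> k" by simp
    then have "phi_mix M X k \<le> phi_mix M X (Suc j)" using dec by (simp add: decseq_def)
    then show "sqrt (phi_mix M X k) \<le> sqrt (phi_mix M X (Suc j))" by simp
  qed
  also have "\<dots> \<le> SS" unfolding SS_def by (intro sum_le_suminf summ) (auto simp: phi_mix_nonneg)
  finally have "real k * sqrt (phi_mix M X k) \<le> SS" .
  then have h: "sqrt (phi_mix M X k) \<le> SS / real k" using k by (simp add: field_simps)
  have "phi_mix M X k = (sqrt (phi_mix M X k))\<^sup>2" using phi_mix_nonneg by simp
  also have "\<dots> \<le> (SS / real k)\<^sup>2" using h phi_mix_nonneg[of k] by (intro power_mono) auto
  finally show ?thesis by (simp add: power_divide)
qed

lemma tail_S:
  assumes q: "q \<ge> 1" and t: "0 < t" "t * q \<le> 1/4"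
  shows "prob {\<omega> \<in> space M. 2 * a \<le> \<bar>Sx x {1..n} \<omega>\<bar>}
    \<le> 4 * exp (- t * a + 3/4 * t\<^sup>2 * V * n + real (n div q + 1) * (3/2 * phi_mix M X (q + 1)))"
proof -
  let ?B = "exp (- t * a + 3/4 * t\<^sup>2 * V * n + real (n div q + 1) * (3/2 * phi_mix M X (q + 1)))"
  define E where "E r s = {\<omega> \<in> space M. a \<le> s * Tr x n q r \<omega>}" for r s
  have Es: "E r s \<in> sets M" for r s
  proof -
    have "(\<lambda>\<omega>. s * Tr x n q r \<omega>) \<in> borel_measurable M"
      by (intro borel_measurable_times borel_measurable_const Tr_meas)
    then show ?thesis unfolding E_def by (intro borel_measurable_le borel_measurable_const)
  qed
  have Eb: "prob (E r s) \<le> ?B" if "r \<le> 1" "\<bar>s\<bar> = 1" for r s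
    unfolding E_def by (rule chernoff_Tr[OF q that(1) t that(2)])
  have sub: "{\<omega> \<in> space M. 2 * a \<le> \<bar>Sx x {1..n} \<omega>\<bar>} \<subseteq> (E 0 1 \<union> E 0 (-1)) \<union> (E 1 1 \<union> E 1 (-1))"
  proof
    fix \<omega> assume w: "\<omega> \<in> {\<omega> \<in> space M. 2 * a \<le> \<bar>Sx x {1..n} \<omega>\<bar>}"
    then have "2 * a \<le> \<bar>Tr x n q 0 \<omega> + Tr x n q 1 \<omega>\<bar>" using Tr_split[of x n \<omega> q] by simp
    then have "a \<le> Tr x n q 0 \<omega> \<or> a \<le> - Tr x n q 0 \<omega> \<or> a \<le> Tr x n q 1 \<omega> \<or> a \<le> - Tr x n q 1 \<omega>"
      by arith
    then show "\<omega> \<in> (E 0 1 \<union> E 0 (-1)) \<union> (E 1 1 \<union> E 1 (-1))" using w by (auto simp: E_def)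
  qed
  have "prob {\<omega> \<in> space M. 2 * a \<le> \<bar>Sx x {1..n} \<omega>\<bar>} \<le> prob ((E 0 1 \<union> E 0 (-1)) \<union> (E 1 1 \<union> E 1 (-1)))"
    using Es by (intro finite_measure_mono[OF sub]) auto
  also have "\<dots> \<le> prob (E 0 1 \<union> E 0 (-1)) + prob (E 1 1 \<union> E 1 (-1))"
    using Es by (intro measure_Un_le) auto
  also have "\<dots> \<le> (prob (E 0 1) + prob (E 0 (-1))) + (prob (E 1 1) + prob (E 1 (-1)))"
    using Es by (intro add_mono measure_Un_le) auto
  also have "\<dots> \<le> (?B + ?B) + (?B + ?B)"
    by (intro add_mono Eb) auto
  finally show ?thesis by simp
qed

lemma Sx_emp: "n \<ge> 1 \<Longrightarrow> \<omega> \<in> space M \<Longrightarrow> emp_df X n \<omega> y - F y = Sx y {1..n} \<omega> / n"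
proof -
  assume n: "n \<ge> 1" and w: "\<omega> \<in> space M"
  have "Sx y {1..n} \<omega> = (\<Sum>i=1..n. if X i \<omega> \<le> y then 1 else 0) - n * F y"
    by (simp add: Sx_def xi_def sum_subtractf)
  then show ?thesis using n by (simp add: emp_df_def field_simps)
qed

lemma tail_n:
  assumes n: "n \<ge> 2" and q: "q \<ge> 1" "real n \<le> real q ^ 3"
    and eta: "\<eta> > 0" "\<eta>\<^sup>2 = c * ln n / n" "\<eta> * q \<le> 3/2" and c: "c \<ge> 64 * V"
  shows "prob {\<omega> \<in> space M. n * \<eta> / 2 \<le> \<bar>Sx x {1..n} \<omega>\<bar>} \<le> 4 * exp (3 * SS\<^sup>2) * n powr (-4/3)"
proof -
  have V: "V \<ge> 1" by (rule V_ge1)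
  define t where "t = \<eta> / (6 * V)"
  define a where "a = n * \<eta> / 4"
  have npos: "real n > 0" using n by simp
  have t0: "0 < t" using eta V by (simp add: t_def)
  have tq: "t * q \<le> 1/4"
  proof -
    have "t * q = (\<eta> * q) / (6 * V)" by (simp add: t_def)
    also have "\<dots> \<le> (3/2) / (6 * V)" using eta V by (intro divide_right_mono) auto
    also have "\<dots> \<le> 1/4" using V by (simp add: field_simps)
    finally show ?thesis .
  qed
  have e1: "- t * a + 3/4 * t\<^sup>2 * V * n = - (n * \<eta>\<^sup>2) / (48 * V)"
    using V by (simp add: t_def a_def field_simps power2_eq_square)
  also have "\<dots> = - (c * ln n) / (48 * V)" using eta npos by simp
  also have "\<dots> \<le> - (4/3) * ln n"
  proof -
    have ln0: "0 \<le> ln (real n)" using n by simp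
    have "64 * V * ln n \<le> c * ln n" using c ln0 by (intro mult_right_mono) auto
    then have "(4/3) * ln n \<le> (c * ln n) / (48 * V)" using V by (simp add: field_simps)
    then show ?thesis by simp
  qed
  finally have ex1: "- t * a + 3/4 * t\<^sup>2 * V * n \<le> - (4/3) * ln n" .
  have ex2: "real (n div q + 1) * (3/2 * phi_mix M X (q + 1)) \<le> 3 * SS\<^sup>2"
  proof -
    have qr: "real q \<ge> 1" using q by simp
    have pq: "phi_mix M X (q + 1) \<le> SS\<^sup>2 / (real q)\<^sup>2"
    proof -
      have "phi_mix M X (q + 1) \<le> SS\<^sup>2 / (real (q + 1))\<^sup>2" by (rule phi_decay) simp
      also have "\<dots> \<le> SS\<^sup>2 / (real q)\<^sup>2"
        using qr by (intro divide_left_mono power_mono mult_pos_pos) auto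
      finally show ?thesis .
    qed
    have nd: "real (n div q + 1) \<le> real n / real q + 1"
    proof -
      have "n div q * q \<le> n" by (rule div_times_less_eq_dividend)
      then have "real (n div q) * real q \<le> real n" by (metis of_nat_le_iff of_nat_mult)
      then have "real (n div q) \<le> real n / real q" using qr by (simp add: field_simps)
      then show ?thesis by simp
    qed
    have "real (n div q + 1) * (3/2 * phi_mix M X (q + 1)) \<le> (real n / real q + 1) * (3/2 * (SS\<^sup>2 / (real q)\<^sup>2))"
      using nd pq phi_mix_nonneg by (intro mult_mono) auto
    also have "\<dots> = 3/2 * SS\<^sup>2 * (real n / real q ^ 3 + 1 / (real q)\<^sup>2)"
      using qr by (simp add: field_simps power2_eq_square power3_eq_cube)
    also have "\<dots> \<le> 3/2 * SS\<^sup>2 * (1 + 1)"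
    proof (intro mult_left_mono add_mono)
      show "real n / real q ^ 3 \<le> 1" using q qr by simp
      show "1 / (real q)\<^sup>2 \<le> 1" using qr by (simp add: field_simps one_le_power)
    qed simp
    finally show ?thesis by simp
  qed
  have "prob {\<omega> \<in> space M. n * \<eta> / 2 \<le> \<bar>Sx x {1..n} \<omega>\<bar>} = prob {\<omega> \<in> space M. 2 * a \<le> \<bar>Sx x {1..n} \<omega>\<bar>}"
    by (simp add: a_def mult.commute)
  also have "\<dots> \<le> 4 * exp (- t * a + 3/4 * t\<^sup>2 * V * n + real (n div q + 1) * (3/2 * phi_mix M X (q + 1)))"
    by (rule tail_S[OF q(1) t0 tq])
  also have "\<dots> \<le> 4 * exp (- (4/3) * ln n + 3 * SS\<^sup>2)"
  proof -
    have "- t * a + 3/4 * t\<^sup>2 * V * n + real (n div q + 1) * (3/2 * phi_mix M X (q + 1)) \<le> - (4/3) * ln n + 3 * SS\<^sup>2"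
      using ex1 ex2 by linarith
    then show ?thesis by simp
  qed
  also have "exp (- (4/3) * ln n + 3 * SS\<^sup>2) = exp (3 * SS\<^sup>2) * n powr (-4/3)"
  proof -
    have "exp (- (4/3) * ln n + 3 * SS\<^sup>2) = exp (3 * SS\<^sup>2) * exp (- (4/3) * ln n)"
      by (simp add: exp_add[symmetric])
    also have "exp (- (4/3) * ln (real n)) = real n powr (-4/3)"
      using npos by (simp add: powr_def mult.commute)
    finally show ?thesis .
  qed
  finally show ?thesis by simp
qed


lemma F_mono: "x \<le> y \<Longrightarrow> F x \<le> F y"
proof -
  assume "x \<le> y"
  then have "Aset x 1 \<subseteq> Aset y 1" by (auto simp: Aset_def)
  then have "prob (Aset x 1) \<le> prob (Aset y 1)" using Aset_sets by (intro finite_measure_mono) auto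
  then show ?thesis using F_prob[of 1] by simp
qed

lemma emp_mono: "x \<le> y \<Longrightarrow> emp_df X n \<omega> x \<le> emp_df X n \<omega> y"
  unfolding emp_df_def by (intro mult_left_mono sum_mono) auto

lemma F_lim_top: "\<exists>x. F x > p'" if "p' < 1"
proof -
  define A where "A m = Aset (real m) 1" for m :: nat
  have "(\<lambda>m. prob (A m)) \<longlonglongrightarrow> prob (\<Union>m. A m)"
    by (rule finite_Lim_measure_incseq) (use Aset_sets in \<open>force simp: A_def\<close>, force simp: A_def incseq_def Aset_def)
  moreover have "(\<Union>m. A m) = space M"
  proof safe
    fix \<omega> assume "\<omega> \<in> space M"
    obtain m :: nat where "X 1 \<omega> \<le> real m" using real_arch_simple by blast
    then show "\<omega> \<in> (\<Union>m. A m)" using \<open>\<omega> \<in> space M\<close> by (auto simp: A_def Aset_def)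
  qed (auto simp: A_def Aset_def)
  ultimately have "(\<lambda>m. prob (A m)) \<longlonglongrightarrow> 1" by (simp add: prob_space)
  then have "eventually (\<lambda>m. prob (A m) > p') sequentially" using that by (rule order_tendstoD)
  then obtain m where "prob (A m) > p'" by (auto simp: eventually_sequentially)
  then show ?thesis using F_prob[of 1] by (auto simp: A_def)
qed

lemma F_lim_bot: "\<exists>x. F x < p'" if "p' > 0"
proof -
  define A where "A m = Aset (- real m) 1" for m :: nat
  have "(\<lambda>m. prob (A m)) \<longlonglongrightarrow> prob (\<Inter>m. A m)"
    by (rule finite_Lim_measure_decseq) (use Aset_sets in \<open>force simp: A_def\<close>, force simp: A_def decseq_def Aset_def)
  moreover have "(\<Inter>m. A m) = {}"
  proof safe
    fix \<omega> assume "\<omega> \<in> (\<Inter>m. A m)"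
    obtain m :: nat where "- X 1 \<omega> < real m" using reals_Archimedean2 by blast
    moreover have "\<omega> \<in> A m" using \<open>\<omega> \<in> (\<Inter>m. A m)\<close> by blast
    ultimately show "\<omega> \<in> {}" by (auto simp: A_def Aset_def)
  qed
  ultimately have "(\<lambda>m. prob (A m)) \<longlonglongrightarrow> 0" by simp
  then have "eventually (\<lambda>m. prob (A m) < p') sequentially" using that by (rule order_tendstoD)
  then obtain m where "prob (A m) < p'" by (auto simp: eventually_sequentially)
  then show ?thesis using F_prob[of 1] by (auto simp: A_def)
qed


lemma grid_bound:
  fixes G Fm :: "real \<Rightarrow> real" and K :: nat
  assumes monoG: "\<And>x y. x \<le> y \<Longrightarrow> G x \<le> G y" and monoF: "\<And>x y. x \<le> y \<Longrightarrow> Fm x \<le> Fm y"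
    and h: "h > 0" and x: "lo \<le> x" "x \<le> lo + real K * h"
    and pts: "\<And>k. k \<le> K + 1 \<Longrightarrow> \<bar>G (lo + real k * h) - Fm (lo + real k * h)\<bar> \<le> \<delta>"
    and inc: "\<And>k. k \<le> K \<Longrightarrow> Fm (lo + (real k + 1) * h) - Fm (lo + real k * h) \<le> D"
  shows "\<bar>G x - Fm x\<bar> \<le> \<delta> + D"
proof -
  define u where "u = (x - lo) / h"
  have u0: "0 \<le> u" using x h by (simp add: u_def)
  have uK: "u \<le> real K" using x h by (simp add: u_def field_simps)
  define k where "k = nat \<lfloor>u\<rfloor>"
  have kr: "real k = of_int \<lfloor>u\<rfloor>" using u0 by (simp add: k_def)
  have k1: "real k \<le> u" "u < real k + 1" using floor_correct[of u] kr by auto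
  have kK: "k \<le> K" using k1(1) uK by linarith
  have lo1: "lo + real k * h \<le> x"
  proof -
    have "real k * h \<le> u * h" using k1 h by (intro mult_right_mono) auto
    then show ?thesis using h by (simp add: u_def)
  qed
  have hi1: "x \<le> lo + (real k + 1) * h"
  proof -
    have "u * h \<le> (real k + 1) * h" using k1 h by (intro mult_right_mono) auto
    then show ?thesis using h by (simp add: u_def)
  qed
  have p0: "\<bar>G (lo + real k * h) - Fm (lo + real k * h)\<bar> \<le> \<delta>" using pts kK by simp
  have p1': "\<bar>G (lo + real (k + 1) * h) - Fm (lo + real (k + 1) * h)\<bar> \<le> \<delta>" using pts[of "k + 1"] kK by linarith
  have ek: "real (k + 1) = real k + 1" by simp
  have p1: "\<bar>G (lo + (real k + 1) * h) - Fm (lo + (real k + 1) * h)\<bar> \<le> \<delta>" using p1' unfolding ek .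
  have i0: "Fm (lo + (real k + 1) * h) - Fm (lo + real k * h) \<le> D" using inc kK by simp
  have "G x \<le> G (lo + (real k + 1) * h)" using monoG hi1 by simp
  moreover have "Fm (lo + real k * h) \<le> Fm x" using monoF lo1 by simp
  moreover have "G (lo + real k * h) \<le> G x" using monoG lo1 by simp
  moreover have "Fm x \<le> Fm (lo + (real k + 1) * h)" using monoF hi1 by simp
  ultimately show ?thesis using p0 p1 i0 unfolding abs_le_iff by linarith
qed

lemma xi_eq_p:
  assumes p: "0 < p" "p < 1" and e: "e > 0" and D: "D \<ge> 0"
    and lip: "\<And>a b. \<xi> - e \<le> a \<Longrightarrow> a \<le> b \<Longrightarrow> b \<le> \<xi> + e \<Longrightarrow> F b - F a \<le> D * (b - a)"
    and xi: "\<xi> = Inf {x. p \<le> F x}"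
  shows "F \<xi> = p"
proof -
  define S where "S = {x. p \<le> F x}"
  obtain x1 where x1: "F x1 > p" using F_lim_top[OF p(2)] by blast
  then have "x1 \<in> S" by (simp add: S_def)
  then have Sne: "S \<noteq> {}" by blast
  obtain x0 where x0: "F x0 < p" using F_lim_bot[OF p(1)] by blast
  have Sbdd: "bdd_below S"
  proof (rule bdd_belowI[of _ x0])
    fix y assume "y \<in> S"
    show "x0 \<le> y"
    proof (rule ccontr)
      assume "\<not> x0 \<le> y"
      then have "F y \<le> F x0" using F_mono by simp
      then show False using x0 \<open>y \<in> S\<close> by (simp add: S_def)
    qed
  qed
  have xiS: "\<xi> = Inf S" using xi by (simp add: S_def)
  have ge: "p \<le> F \<xi>"
  proof (rule ccontr)
    assume "\<not> p \<le> F \<xi>"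
    then have g: "p - F \<xi> > 0" by simp
    define \<epsilon> where "\<epsilon> = min e ((p - F \<xi>) / (2 * (D + 1)))"
    have \<epsilon>0: "\<epsilon> > 0" using e g D by (simp add: \<epsilon>_def)
    have "Inf S < \<xi> + \<epsilon>" using xiS \<epsilon>0 by simp
    then obtain y where y: "y \<in> S" "y < \<xi> + \<epsilon>" using cInf_lessD[OF Sne] by blast
    have "\<xi> \<le> y" using xiS cInf_lower[OF y(1) Sbdd] by simp
    then have "F y - F \<xi> \<le> D * (y - \<xi>)" using lip y(2) e \<epsilon>0 by (intro lip) (auto simp: \<epsilon>_def)
    also have "\<dots> \<le> D * \<epsilon>" using y(2) D by (intro mult_left_mono) auto
    also have "\<dots> \<le> D * ((p - F \<xi>) / (2 * (D + 1)))" using D by (intro mult_left_mono) (auto simp: \<epsilon>_def)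
    also have "\<dots> < p - F \<xi>"
    proof -
      have "D * (p - F \<xi>) < 2 * (D + 1) * (p - F \<xi>)" using g D by (intro mult_strict_right_mono) auto
      then show ?thesis using D by (simp add: field_simps)
    qed
    finally have "F y < p" by simp
    then show False using y(1) by (simp add: S_def)
  qed
  have le: "F \<xi> \<le> p"
  proof (rule ccontr)
    assume "\<not> F \<xi> \<le> p"
    then have g: "F \<xi> - p > 0" by simp
    define \<epsilon> where "\<epsilon> = min e ((F \<xi> - p) / (2 * (D + 1)))"
    have \<epsilon>0: "\<epsilon> > 0" using e g D by (simp add: \<epsilon>_def)
    have "\<xi> - \<epsilon> \<notin> S"
    proof
      assume "\<xi> - \<epsilon> \<in> S"
      then have "Inf S \<le> \<xi> - \<epsilon>" using cInf_lower[OF _ Sbdd] by blast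
      then show False using xiS \<epsilon>0 by simp
    qed
    then have Fz: "F (\<xi> - \<epsilon>) < p" by (simp add: S_def)
    have "F \<xi> - F (\<xi> - \<epsilon>) \<le> D * (\<xi> - (\<xi> - \<epsilon>))" using e \<epsilon>0 by (intro lip) (auto simp: \<epsilon>_def)
    also have "\<dots> \<le> D * ((F \<xi> - p) / (2 * (D + 1)))" using D by (intro mult_left_mono) (auto simp: \<epsilon>_def)
    also have "\<dots> < F \<xi> - p"
    proof -
      have "D * (F \<xi> - p) < 2 * (D + 1) * (F \<xi> - p)" using g D by (intro mult_strict_right_mono) auto
      then show ?thesis using D by (simp add: field_simps)
    qed
    finally show False using Fz by simp
  qed
  show ?thesis using ge le by simp
qed


lemma main:
  fixes f :: "real \<Rightarrow> real" and N :: "real set" and p \<theta> :: real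
  assumes p: "0 < p" "p < 1"
    and N: "open N" "Inf {x. F x \<ge> p} \<in> N"
    and dens: "\<And>a b. a \<le> b \<Longrightarrow> {a..b} \<subseteq> N \<Longrightarrow> (f has_integral (F b - F a)) {a..b}"
    and fpos: "\<And>x. x \<in> N \<Longrightarrow> f x > 0"
    and fbdd: "bdd_above (f ` N)"
    and \<theta>: "\<theta> > 0"
  shows "let \<xi> = Inf {x. F x \<ge> p};
             d = Sup (f ` N);
             C3 = 4 * (1 + 4 * (\<Sum>n. sqrt (phi_mix M X (Suc n))));
             \<tau> = (\<lambda>n::nat. sqrt (16 * C3 + \<theta>) * ln (real n) powr (3/2)
                    / (sqrt (real n) * sqrt (ln (ln (real n)))))
         in AE \<omega> in M. eventually (\<lambda>n. \<forall>x \<in> {\<xi> - \<tau> n .. \<xi> + \<tau> n}.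
               \<bar>(emp_df X n \<omega> x - F x) - (emp_df X n \<omega> \<xi> - p)\<bar>
                 \<le> (1 + d) * sqrt ((16 * C3 + \<theta>) * ln (real n) / real n)) sequentially"
proof -
  define \<xi> where "\<xi> = Inf {x. F x \<ge> p}"
  define d where "d = Sup (f ` N)"
  define C3 where "C3 = 4 * (1 + 4 * SS)"
  define c where "c = 16 * C3 + \<theta>"
  define g where "g = (\<lambda>n::real. ln n powr (3/2) / (sqrt n * sqrt (ln (ln n))))"
  define h where "h = (\<lambda>n::real. sqrt (ln n / n))"
  define \<tau> where "\<tau> = (\<lambda>n::nat. sqrt c * ln (real n) powr (3/2) / (sqrt (real n) * sqrt (ln (ln (real n)))))"
  define \<eta> where "\<eta> = (\<lambda>n::nat. sqrt (c * ln (real n) / real n))"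
  define q where "q = (\<lambda>n::nat. nat \<lceil>real n powr (1/3)\<rceil>)"
  have SS0: "0 \<le> SS" by (rule SS_nonneg)
  have VSS: "V \<le> 1 + 2 * SS"
  proof -
    have "(\<Sum>k. phi_mix M X (Suc k)) \<le> SS"
      unfolding SS_def by (intro suminf_le phi_summable summ) (simp add: phi_le_sqrt)
    then show ?thesis by (simp add: V_def)
  qed
  have c64: "c \<ge> 64 * V" using VSS SS0 \<theta> by (simp add: c_def C3_def)
  have cpos: "c > 0" using c64 V_ge1 by linarith
  have sc: "sqrt c > 0" using cpos by simp
  have tau_eq: "\<tau> n = sqrt c * g (real n)" for n by (simp add: \<tau>_def g_def)
  have eta_eq: "\<eta> n = sqrt c * h (real n)" for n
  proof -
    have "sqrt (c * ln (real n) / real n) = sqrt (c * (ln (real n) / real n))" by simp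
    also have "\<dots> = sqrt c * sqrt (ln (real n) / real n)" by (rule real_sqrt_mult)
    finally show ?thesis unfolding \<eta>_def h_def .
  qed
  have xiN: "\<xi> \<in> N" using N by (simp add: \<xi>_def)
  obtain e0 where e0: "e0 > 0" "ball \<xi> e0 \<subseteq> N" using N(1) xiN openE by blast
  define e where "e = e0 / 2"
  have e: "e > 0" using e0 by (simp add: e_def)
  have int_sub: "{a..b} \<subseteq> N" if "\<xi> - e \<le> a" "b \<le> \<xi> + e" for a b
  proof
    fix y assume "y \<in> {a..b}"
    then have "dist \<xi> y < e0" using that e0 by (auto simp: dist_real_def e_def)
    then show "y \<in> N" using e0 by auto
  qed
  have fd: "f y \<le> d" if "y \<in> N" for y unfolding d_def using that fbdd by (intro cSup_upper) auto
  have d0: "d \<ge> 0" using fd[OF xiN] fpos[OF xiN] by simp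
  have lip: "F b - F a \<le> d * (b - a)" if "\<xi> - e \<le> a" "a \<le> b" "b \<le> \<xi> + e" for a b
  proof -
    have sub: "{a..b} \<subseteq> N" using int_sub that by simp
    have hc: "((\<lambda>x. d) has_integral ((b - a) * d)) {a..b}"
      using has_integral_const_real[of d a b] that by simp
    have "F b - F a \<le> (b - a) * d"
      by (rule has_integral_le[OF dens[OF that(2) sub] hc]) (use fd sub in auto)
    then show ?thesis by (simp add: mult.commute)
  qed
  have Fxi: "F \<xi> = p"
    by (rule xi_eq_p[OF p e d0 lip]) (simp_all add: \<xi>_def)
  have ev1: "eventually (\<lambda>n. \<tau> n + 2 * \<eta> n \<le> e) sequentially"
  proof -
    have "((\<lambda>n. sqrt c * g (real n) + 2 * (sqrt c * h (real n))) \<longlongrightarrow> sqrt c * 0 + 2 * (sqrt c * 0)) sequentially"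
      using asy1 asy2 unfolding g_def h_def
      by (intro tendsto_intros filterlim_compose[OF _ filterlim_real_sequentially]) auto
    then have "eventually (\<lambda>n. sqrt c * g (real n) + 2 * (sqrt c * h (real n)) < e) sequentially"
      using e by (intro order_tendstoD) auto
    then show ?thesis by eventually_elim (simp add: tau_eq eta_eq)
  qed
  have ev2: "eventually (\<lambda>n. 2 * (g (real n)) / h (real n) + 4 \<le> real n powr (1/12)) sequentially"
    using ev_nat[OF asy3] unfolding g_def h_def .
  have ev3: "eventually (\<lambda>n. sqrt c * (h (real n) * (real n powr (1/3) + 1)) \<le> 3/2) sequentially"
  proof -
    have "((\<lambda>n. sqrt c * (h (real n) * (real n powr (1/3) + 1))) \<longlongrightarrow> sqrt c * 0) sequentially"
      using asy4 unfolding h_def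
      by (intro tendsto_intros filterlim_compose[OF _ filterlim_real_sequentially]) auto
    then have "eventually (\<lambda>n. sqrt c * (h (real n) * (real n powr (1/3) + 1)) < 3/2) sequentially"
      by (intro order_tendstoD) auto
    then show ?thesis by eventually_elim simp
  qed
  obtain n0 where n0: "\<And>n. n \<ge> n0 \<Longrightarrow> n \<ge> 2 \<and> \<tau> n + 2 * \<eta> n \<le> e \<and> 0 \<le> ln (ln (real n))
      \<and> 2 * (g (real n)) / h (real n) + 4 \<le> real n powr (1/12)
      \<and> sqrt c * (h (real n) * (real n powr (1/3) + 1)) \<le> 3/2"
  proof -
    have "eventually (\<lambda>n. n \<ge> 2 \<and> \<tau> n + 2 * \<eta> n \<le> e \<and> 0 \<le> ln (ln (real n))
      \<and> 2 * (g (real n)) / h (real n) + 4 \<le> real n powr (1/12)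
      \<and> sqrt c * (h (real n) * (real n powr (1/3) + 1)) \<le> 3/2) sequentially"
      using ev1 ev2 ev3 eventually_ge_at_top[of "2::nat"] ev_nat[OF asy5] by eventually_elim auto
    then show ?thesis using that unfolding eventually_sequentially by blast
  qed

  define K where "K = (\<lambda>n. nat \<lceil>2 * \<tau> n / \<eta> n\<rceil>)"
  define pt where "pt = (\<lambda>n k. if k = K n + 2 then \<xi> else \<xi> - \<tau> n + real k * \<eta> n)"
  define Ev where "Ev = (\<lambda>n k. {\<omega> \<in> space M. real n * \<eta> n / 2 \<le> \<bar>Sx (pt n k) {1..n} \<omega>\<bar>})"
  define Bd where "Bd = (\<lambda>n. if n0 \<le> n then (\<Union>k\<in>{0..K n + 2}. Ev n k) else {})"
  define C where "C = 4 * exp (3 * SS\<^sup>2)"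
  have C0: "C \<ge> 0" by (simp add: C_def)
  have h_pos: "h (real n) > 0" if "n \<ge> 2" for n
    using that by (simp add: h_def)
  have eta_pos: "\<eta> n > 0" if "n \<ge> 2" for n
    using h_pos[OF that] sc by (simp add: eta_eq)
  have eta_sq: "(\<eta> n)\<^sup>2 = c * ln (real n) / real n" if "n \<ge> 2" for n
  proof -
    have "0 \<le> c * ln (real n) / real n" using cpos that by simp
    then show ?thesis by (simp add: \<eta>_def)
  qed
  have q1: "q n \<ge> 1" if "n \<ge> 1" for n
  proof -
    have "real n powr (1/3) > 0" using that by simp
    then have "real_of_int \<lceil>real n powr (1/3)\<rceil> > 0" using le_of_int_ceiling[of "real n powr (1/3)"] by linarith
    then have "\<lceil>real n powr (1/3)\<rceil> \<ge> 1" by simp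
    then have "nat 1 \<le> nat \<lceil>real n powr (1/3)\<rceil>" by (rule nat_mono)
    then show ?thesis by (simp add: q_def)
  qed
  have qlo: "real n powr (1/3) \<le> real (q n)" for n
  proof -
    have "real n powr (1/3) \<ge> 0" by simp
    then have "real (q n) = of_int \<lceil>real n powr (1/3)\<rceil>" by (simp add: q_def)
    then show ?thesis using le_of_int_ceiling[of "real n powr (1/3)"] by simp
  qed
  have qhi: "real (q n) \<le> real n powr (1/3) + 1" for n
  proof -
    have "real n powr (1/3) \<ge> 0" by simp
    then have "real (q n) = of_int \<lceil>real n powr (1/3)\<rceil>" by (simp add: q_def)
    also have "\<dots> \<le> real n powr (1/3) + 1" using ceiling_correct[of "real n powr (1/3)"] by linarith
    finally show ?thesis .
  qed
  have qcube: "real n \<le> real (q n) ^ 3" for n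
  proof -
    have "real n = (real n powr (1/3)) ^ 3"
    proof -
      have "(real n powr (1/3)) ^ 3 = real n powr (1/3) * real n powr (1/3) * real n powr (1/3)"
        by (simp add: power3_eq_cube)
      also have "\<dots> = real n powr (1/3 + 1/3 + 1/3)" by (simp only: powr_add[symmetric])
      also have "\<dots> = real n" by (cases "n = 0") auto
      finally show ?thesis by simp
    qed
    also have "\<dots> \<le> real (q n) ^ 3" using qlo by (intro power_mono) auto
    finally show ?thesis .
  qed
  have etaq: "\<eta> n * real (q n) \<le> 3/2" if "n \<ge> n0" for n
  proof -
    have n2: "n \<ge> 2" using n0[OF that] by simp
    have "\<eta> n * real (q n) \<le> \<eta> n * (real n powr (1/3) + 1)"
      using eta_pos[OF n2] qhi by (intro mult_left_mono) auto
    also have "\<dots> = sqrt c * (h (real n) * (real n powr (1/3) + 1))" by (simp add: eta_eq)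
    also have "\<dots> \<le> 3/2" using n0[OF that] by simp
    finally show ?thesis .
  qed
  have ratio: "2 * \<tau> n / \<eta> n = 2 * g (real n) / h (real n)" if "n \<ge> 2" for n
    using sc h_pos[OF that] by (simp add: tau_eq eta_eq)
  have tau0: "\<tau> n \<ge> 0" if "n \<ge> n0" for n
  proof -
    have "0 \<le> ln (ln (real n))" "n \<ge> 2" using n0[OF that] by auto
    then show ?thesis unfolding \<tau>_def using cpos by (intro divide_nonneg_nonneg mult_nonneg_nonneg) auto
  qed
  have Kb: "real (K n) \<le> 2 * \<tau> n / \<eta> n + 1" if "n \<ge> n0" for n
  proof -
    have "2 * \<tau> n / \<eta> n \<ge> 0" using tau0[OF that] eta_pos n0[OF that] by (simp add: less_imp_le)
    then have "real (K n) = of_int \<lceil>2 * \<tau> n / \<eta> n\<rceil>" by (simp add: K_def)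
    also have "\<dots> \<le> 2 * \<tau> n / \<eta> n + 1" using ceiling_correct[of "2 * \<tau> n / \<eta> n"] by linarith
    finally show ?thesis .
  qed
  have Kge: "2 * \<tau> n \<le> real (K n) * \<eta> n" if "n \<ge> 2" for n
  proof -
    have a: "2 * \<tau> n / \<eta> n \<le> real_of_int \<lceil>2 * \<tau> n / \<eta> n\<rceil>" by (rule le_of_int_ceiling)
    have b: "real_of_int z \<le> real (nat z)" for z :: int by (cases "z \<ge> 0") auto
    have "2 * \<tau> n / \<eta> n \<le> real (K n)" unfolding K_def using a b[of "\<lceil>2 * \<tau> n / \<eta> n\<rceil>"] by linarith
    then show ?thesis using eta_pos[OF that] by (simp add: field_simps)
  qed
  have Kcount: "real (K n) + 3 \<le> real n powr (1/12)" if "n \<ge> n0" for n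
    using Kb[OF that] n0[OF that] ratio[of n] by simp
  have Sx_meas': "(\<lambda>\<omega>. \<bar>Sx y {1..n} \<omega>\<bar>) \<in> borel_measurable M" for y n
    using Sx_meas by (intro borel_measurable_abs) simp
  have Ev_sets: "Ev n k \<in> sets M" for n k
    unfolding Ev_def by (intro borel_measurable_le borel_measurable_const Sx_meas')
  have Ev_prob: "prob (Ev n k) \<le> C * real n powr (-4/3)" if "n \<ge> n0" for n k
  proof -
    have n2: "n \<ge> 2" using n0[OF that] by simp
    show ?thesis unfolding Ev_def C_def
      by (rule tail_n[OF n2 q1 qcube eta_pos[OF n2] eta_sq[OF n2] etaq[OF that] c64]) (use n2 in simp)
  qed
  have Bd_sets: "Bd n \<in> sets M" for n
    unfolding Bd_def using Ev_sets by auto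
  have Bd_prob: "prob (Bd n) \<le> C * real n powr (-5/4)" for n
  proof (cases "n0 \<le> n")
    case True
    have "prob (Bd n) = prob (\<Union>k\<in>{0..K n + 2}. Ev n k)" using True by (simp add: Bd_def)
    also have "\<dots> \<le> (\<Sum>k\<in>{0..K n + 2}. prob (Ev n k))"
      using Ev_sets by (intro finite_measure_subadditive_finite) auto
    also have "\<dots> \<le> (\<Sum>k\<in>{0..K n + 2}. C * real n powr (-4/3))"
      by (intro sum_mono Ev_prob True)
    also have "\<dots> = (real (K n) + 3) * (C * real n powr (-4/3))" by simp
    also have "\<dots> \<le> real n powr (1/12) * (C * real n powr (-4/3))"
      using Kcount[OF True] C0 by (intro mult_right_mono) auto
    also have "\<dots> = C * (real n powr (1/12) * real n powr (-4/3))" by simp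
    also have "real n powr (1/12) * real n powr (-4/3) = real n powr (-5/4)"
      by (simp add: powr_add[symmetric])
    finally show ?thesis by simp
  next
    case False
    then show ?thesis using C0 by (simp add: Bd_def)
  qed
  have summ_Bd: "summable (\<lambda>n. prob (Bd n))"
  proof (rule summable_comparison_test)
    show "\<exists>N. \<forall>n\<ge>N. norm (prob (Bd n)) \<le> C * real n powr (-5/4)" using Bd_prob by auto
    show "summable (\<lambda>n. C * real n powr (-5/4))"
      by (intro summable_mult) (simp add: summable_real_powr_iff)
  qed
  have BC: "AE \<omega> in M. eventually (\<lambda>n. \<omega> \<in> space M - Bd n) sequentially"
    by (rule borel_cantelli_AE1[OF Bd_sets _ summ_Bd]) (simp add: emeasure_finite less_top[symmetric])
  have fin: "AE \<omega> in M. eventually (\<lambda>n. \<forall>x\<in>{\<xi> - \<tau> n..\<xi> + \<tau> n}.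
      \<bar>(emp_df X n \<omega> x - F x) - (emp_df X n \<omega> \<xi> - p)\<bar> \<le> (1 + d) * \<eta> n) sequentially"
    using BC
  proof (rule eventually_mono)
    fix \<omega> assume ev: "eventually (\<lambda>n. \<omega> \<in> space M - Bd n) sequentially"
    show "eventually (\<lambda>n. \<forall>x\<in>{\<xi> - \<tau> n..\<xi> + \<tau> n}.
      \<bar>(emp_df X n \<omega> x - F x) - (emp_df X n \<omega> \<xi> - p)\<bar> \<le> (1 + d) * \<eta> n) sequentially"
      using ev eventually_ge_at_top[of n0]
    proof eventually_elim
      case (elim n)
      have w: "\<omega> \<in> space M" and nB: "\<omega> \<notin> Bd n" using elim by auto
      have nn: "n \<ge> 2" "\<tau> n + 2 * \<eta> n \<le> e" using n0[OF elim(2)] by auto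
      have ep: "\<eta> n > 0" by (rule eta_pos[OF nn(1)])
      have good: "\<bar>emp_df X n \<omega> (pt n k) - F (pt n k)\<bar> \<le> \<eta> n / 2" if "k \<le> K n + 2" for k
      proof -
        have "\<omega> \<notin> Ev n k" using nB that elim(2) by (auto simp: Bd_def)
        then have "\<bar>Sx (pt n k) {1..n} \<omega>\<bar> < real n * \<eta> n / 2" using w by (auto simp: Ev_def)
        then have "\<bar>Sx (pt n k) {1..n} \<omega>\<bar> / real n \<le> \<eta> n / 2" using nn by (simp add: field_simps)
        moreover have "emp_df X n \<omega> (pt n k) - F (pt n k) = Sx (pt n k) {1..n} \<omega> / real n"
          using nn w by (intro Sx_emp) auto
        ultimately show ?thesis by simp
      qed
      have tau_e: "\<tau> n \<le> e" using nn ep by linarith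
      have gx: "\<bar>emp_df X n \<omega> x - F x\<bar> \<le> \<eta> n / 2 + d * \<eta> n" if x: "x \<in> {\<xi> - \<tau> n..\<xi> + \<tau> n}" for x
      proof (rule grid_bound[where G="emp_df X n \<omega>" and Fm=F and h="\<eta> n" and lo="\<xi> - \<tau> n" and K="K n"])
        show "\<And>x y. x \<le> y \<Longrightarrow> emp_df X n \<omega> x \<le> emp_df X n \<omega> y" by (rule emp_mono)
        show "\<And>x y. x \<le> y \<Longrightarrow> F x \<le> F y" by (rule F_mono)
        show "\<eta> n > 0" by (rule ep)
        show "\<xi> - \<tau> n \<le> x" using x by simp
        show "x \<le> \<xi> - \<tau> n + real (K n) * \<eta> n" using x Kge[OF nn(1)] by simp
        show "\<bar>emp_df X n \<omega> (\<xi> - \<tau> n + real k * \<eta> n) - F (\<xi> - \<tau> n + real k * \<eta> n)\<bar> \<le> \<eta> n / 2"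
          if "k \<le> K n + 1" for k
          using good[of k] that by (simp add: pt_def)
        show "F (\<xi> - \<tau> n + (real k + 1) * \<eta> n) - F (\<xi> - \<tau> n + real k * \<eta> n) \<le> d * \<eta> n"
          if "k \<le> K n" for k
        proof -
          have "real k \<le> real (K n)" using that by simp
          also have "\<dots> \<le> 2 * \<tau> n / \<eta> n + 1" by (rule Kb[OF elim(2)])
          finally have "real k * \<eta> n \<le> (2 * \<tau> n / \<eta> n + 1) * \<eta> n" using ep by (intro mult_right_mono) auto
          also have "\<dots> = 2 * \<tau> n + \<eta> n" using ep by (simp add: field_simps)
          finally have kb: "real k * \<eta> n \<le> 2 * \<tau> n + \<eta> n" .
          have "F (\<xi> - \<tau> n + (real k + 1) * \<eta> n) - F (\<xi> - \<tau> n + real k * \<eta> n)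
              \<le> d * ((\<xi> - \<tau> n + (real k + 1) * \<eta> n) - (\<xi> - \<tau> n + real k * \<eta> n))"
          proof (rule lip)
            have "0 \<le> real k * \<eta> n" using ep by simp
            then show "\<xi> - e \<le> \<xi> - \<tau> n + real k * \<eta> n" using tau_e by linarith
            show "\<xi> - \<tau> n + real k * \<eta> n \<le> \<xi> - \<tau> n + (real k + 1) * \<eta> n" using ep by (simp add: algebra_simps)
            show "\<xi> - \<tau> n + (real k + 1) * \<eta> n \<le> \<xi> + e" using kb nn(2) by (simp add: algebra_simps)
          qed
          also have "\<dots> = d * \<eta> n" by (simp add: algebra_simps)
          finally show ?thesis .
        qed
      qed
      have gxi: "\<bar>emp_df X n \<omega> \<xi> - p\<bar> \<le> \<eta> n / 2"
        using good[of "K n + 2"] Fxi by (simp add: pt_def)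
      show ?case
      proof
        fix x assume x: "x \<in> {\<xi> - \<tau> n..\<xi> + \<tau> n}"
        have "\<bar>(emp_df X n \<omega> x - F x) - (emp_df X n \<omega> \<xi> - p)\<bar> \<le> \<bar>emp_df X n \<omega> x - F x\<bar> + \<bar>emp_df X n \<omega> \<xi> - p\<bar>"
          by (rule abs_triangle_ineq4)
        also have "\<dots> \<le> (\<eta> n / 2 + d * \<eta> n) + \<eta> n / 2" using gx[OF x] gxi by (rule add_mono)
        also have "\<dots> = (1 + d) * \<eta> n" by (simp add: algebra_simps)
        finally show "\<bar>(emp_df X n \<omega> x - F x) - (emp_df X n \<omega> \<xi> - p)\<bar> \<le> (1 + d) * \<eta> n" .
      qed
    qed
  qed
  then show ?thesis
    unfolding Let_def by (simp only: \<xi>_def d_def C3_def c_def \<tau>_def \<eta>_def SS_def)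
qed

end

theorem theorem2p3:
  fixes M :: "'a measure" and X :: "nat \<Rightarrow> 'a \<Rightarrow> real"
    and F f :: "real \<Rightarrow> real" and N :: "real set" and p \<theta> :: real
  assumes "prob_space M"
    and rv: "\<And>i. X i \<in> borel_measurable M"
    and marg: "\<And>i x. i \<ge> 1 \<Longrightarrow> measure M {\<omega> \<in> space M. X i \<omega> \<le> x} = F x"
    and mixing: "decseq (phi_mix M X) \<and> phi_mix M X \<longlonglongrightarrow> 0"
    and summ: "summable (\<lambda>n. sqrt (phi_mix M X (Suc n)))"
    and p: "0 < p" "p < 1"
    and N: "open N" "Inf {x. F x \<ge> p} \<in> N"
    and dens: "\<And>a b. a \<le> b \<Longrightarrow> {a..b} \<subseteq> N \<Longrightarrow> (f has_integral (F b - F a)) {a..b}"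
    and fpos: "\<And>x. x \<in> N \<Longrightarrow> f x > 0"
    and fcont: "continuous_on N f"
    and fbdd: "bdd_above (f ` N)"
    and \<theta>: "\<theta> > 0"
  shows "let \<xi> = Inf {x. F x \<ge> p};
             d = Sup (f ` N);
             C3 = 4 * (1 + 4 * (\<Sum>n. sqrt (phi_mix M X (Suc n))));
             \<tau> = (\<lambda>n::nat. sqrt (16 * C3 + \<theta>) * ln (real n) powr (3/2)
                    / (sqrt (real n) * sqrt (ln (ln (real n)))))
         in AE \<omega> in M. eventually (\<lambda>n. \<forall>x \<in> {\<xi> - \<tau> n .. \<xi> + \<tau> n}.
               \<bar>(emp_df X n \<omega> x - F x) - (emp_df X n \<omega> \<xi> - p)\<bar>
                 \<le> (1 + d) * sqrt ((16 * C3 + \<theta>) * ln (real n) / real n)) sequentially"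
proof -
  interpret mx M X F
  proof (rule mx.intro)
    show "prob_space M" by (rule assms(1))
    show "mx_axioms M X F"
      by (rule mx_axioms.intro) (use rv marg summ mixing in auto)
  qed
  show ?thesis by (rule main[OF p N dens fpos fbdd \<theta>])
qed

end
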